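(* Suppose every density in $\mathcal F$ (including the noise density $N$) is Gaussian. Then for every independent meeting pattern, every assignment of densities, every sensor $a$ and every round $t$, $$\mathrm{var}(X_a(t,\mathrm{ALG}))=V^{\mathrm{opt}}_a(t).$$
   Context: Model. Fix a finite set $\mathcal F$ of smooth probability densities on $\mathbb R$, each with mean zero and finite variance; a density $\Phi$ is smooth if $\Phi(x)>0$ for all $x\in\mathbb R$, $\Phi'$ exists, and $J_\Phi:=\int_{\mathbb R}\Phi'(y)^2/\Phi(y)\,dy<\infty$. One element $N\in\mathcal F$ is the noise density; $\mathrm{var}(N)$ is its variance. There are $n$ sensors; each sensor $a$ is assigned $\Phi_a\in\mathcal F$. An unknown $\tau^*\in\mathbb R$ is fixed, and the initial opinions $X_a(0)$ are independent, $X_a(0)$ having density $\Phi_a(x-\tau^* )$. Rounds are $t=0,1,2,\dots$. A meeting pattern $\mathcal P$ specifies in advance, for each round $t$ and each sensor $a$, at most one other sensor $b$ that $a$ observes at round $t$. When $a$ observes $b$ at round $t$, $a$ obtains $\tilde d_{ab}(t)=X_b(t)-X_a(t)+\eta$, where $X_c(t)$ denotes the current opinion of sensor $c$ and $\eta$ has density $N$ and is independent of everything else (fresh noise for each observation). Relevant sets: $R_a(0)=\{a\}$; $R_a(t+1)=R_a(t)\cup R_b(t)$ if $a$ observes $b$ at round $t$, and $R_a(t+1)=R_a(t)$ otherwise. $\mathcal P$ is independent if whenever $a$ observes $b$ at round $t$, $R_a(t)\cap R_b(t)=\emptyset$. Information of a sensor. Histories: $H_a(0)=\emptyset$; if $a$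 observes $b$ at round $t$ then $H_a(t+1)=H_a(t)\cup H_b(t)\cup\{(a,b,t)\}$, otherwise $H_a(t+1)=H_a(t)$. For an observation event $e=(c,d,s)$ with noise $\eta_e$, set $D_e=X_d(0)-X_c(0)+\eta_e$. The information of $a$ at round $t$ is $M_a(t)=(X_a(0),(D_e)_{e\in H_a(t)})$. The optimal variance $V^{\mathrm{opt}}_a(t)$ is the infimum of $\mathrm{var}(\hat X)$ over all unbiased estimators $\hat X$ of $\tau^*$ that are measurable functions of $M_a(t)$ (possibly using auxiliary randomness independent of everything else). Algorithm ALG. Each sensor $a$ keeps an opinion $x_a$ and an accuracy $c_a$, with $x_a(0)=X_a(0)$ and $c_a(0)=1/\mathrm{var}(\Phi_a)$. If $a$ observes $b$ at round $t$, let $\hat c_b(t)=c_b(t)/(1+c_b(t)\,\mathrm{var}(N))$ and set $x_a(t+1)=x_a(t)+\tilde d_{ab}(t)\,\hat c_b(t)/(c_a(t)+\hat c_b(t))$ and $c_a(t+1)=c_a(t)+\hat c_b(t)$ (here $\tilde d_{ab}(t)=x_b(t)-x_a(t)+\eta$); otherwise $x_a(t+1)=x_a(t)$, $c_a(t+1)=c_a(t)$. $X_a(t,\mathrm{ALG})$ is the random variable $x_a(t)$. *)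

theory Defs
  imports "HOL-Probability.Probability"
begin

text \<open>Sensors are the elements of a finite type 's. A meeting pattern is a map
  P :: nat => 's => 's option; P t a = Some b means that a observes b at round t.\<close>

definition meeting_pattern :: "(nat \<Rightarrow> 's \<Rightarrow> 's option) \<Rightarrow> bool" where
  "meeting_pattern P \<longleftrightarrow> (\<forall>t a. P t a \<noteq> Some a)"

primrec relevant :: "(nat \<Rightarrow> 's \<Rightarrow> 's option) \<Rightarrow> nat \<Rightarrow> 's \<Rightarrow> 's set" where
  "relevant P 0 = (\<lambda>a. {a})"
| "relevant P (Suc t) = (\<lambda>a. case P t a of
       None \<Rightarrow> relevant P t a
     | Some b \<Rightarrow> relevant P t a \<union> relevant P t b)"

definition independent_pattern :: "(nat \<Rightarrow> 's \<Rightarrow> 's option) \<Rightarrow> bool" where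
  "independent_pattern P \<longleftrightarrow>
     (\<forall>t a b. P t a = Some b \<longrightarrow> relevant P t a \<inter> relevant P t b = {})"

primrec history :: "(nat \<Rightarrow> 's \<Rightarrow> 's option) \<Rightarrow> nat \<Rightarrow> 's \<Rightarrow> ('s \<times> 's \<times> nat) set" where
  "history P 0 = (\<lambda>a. {})"
| "history P (Suc t) = (\<lambda>a. case P t a of
       None \<Rightarrow> history P t a
     | Some b \<Rightarrow> history P t a \<union> history P t b \<union> {(a, b, t)})"

definition mvar :: "'a measure \<Rightarrow> ('a \<Rightarrow> real) \<Rightarrow> real" where
  "mvar M X = integral\<^sup>L M (\<lambda>x. (X x - integral\<^sup>L M X)\<^sup>2)"

definition dens_measure :: "(real \<Rightarrow> real) \<Rightarrow> real measure" where
  "dens_measure \<phi> = density lborel (\<lambda>x. ennreal (\<phi> x))"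

definition dvar :: "(real \<Rightarrow> real) \<Rightarrow> real" where
  "dvar \<phi> = mvar (dens_measure \<phi>) (\<lambda>x. x)"

text \<open>Underlying randomness up to round t: the initial opinions X_c(0) (one per
  sensor) and one noise variable eta(c,s) for the (unique, if any) observation made
  by sensor c at round s < t.\<close>
type_synonym 's omega = "('s \<Rightarrow> real) \<times> ('s \<times> nat \<Rightarrow> real)"

definition base :: "('s \<Rightarrow> real \<Rightarrow> real) \<Rightarrow> (real \<Rightarrow> real) \<Rightarrow> real \<Rightarrow> nat \<Rightarrow> 's omega measure" where
  "base \<Phi> N \<tau> t =
     (\<Pi>\<^sub>M c\<in>UNIV. dens_measure (\<lambda>x. \<Phi> c (x - \<tau>)))
       \<Otimes>\<^sub>M (\<Pi>\<^sub>M e\<in>UNIV \<times> {..<t}. dens_measure N)"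

definition Dobs :: "'s omega \<Rightarrow> ('s \<times> 's \<times> nat) \<Rightarrow> real" where
  "Dobs \<omega> e = (case e of (c, d, s) \<Rightarrow> fst \<omega> d - fst \<omega> c + snd \<omega> (c, s))"

definition info :: "(nat \<Rightarrow> 's \<Rightarrow> 's option) \<Rightarrow> 's \<Rightarrow> nat \<Rightarrow> 's omega
                     \<Rightarrow> real \<times> (('s \<times> 's \<times> nat) \<Rightarrow> real)" where
  "info P a t \<omega> = (fst \<omega> a, restrict (Dobs \<omega>) (history P t a))"

definition info_space :: "(nat \<Rightarrow> 's \<Rightarrow> 's option) \<Rightarrow> 's \<Rightarrow> nat
                           \<Rightarrow> (real \<times> (('s \<times> 's \<times> nat) \<Rightarrow> real)) measure" where
  "info_space P a t = (borel :: real measure) \<Otimes>\<^sub>M (\<Pi>\<^sub>M e\<in>history P t a. (borel :: real measure))"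

text \<open>A (possibly randomized) estimator based on M_a(t) is a Markov kernel K from
  the information space to the reals; its output distribution under parameter tau is
  the law of M_a(t) bound with K.\<close>
definition est_distr :: "('s \<Rightarrow> real \<Rightarrow> real) \<Rightarrow> (real \<Rightarrow> real) \<Rightarrow> (nat \<Rightarrow> 's \<Rightarrow> 's option)
     \<Rightarrow> 's \<Rightarrow> nat \<Rightarrow> (real \<times> (('s \<times> 's \<times> nat) \<Rightarrow> real) \<Rightarrow> real measure) \<Rightarrow> real \<Rightarrow> real measure" where
  "est_distr \<Phi> N P a t K \<tau> = distr (base \<Phi> N \<tau> t) (info_space P a t) (info P a t) \<bind> K"

definition unbiased_estimator :: "('s \<Rightarrow> real \<Rightarrow> real) \<Rightarrow> (real \<Rightarrow> real) \<Rightarrow> (nat \<Rightarrow> 's \<Rightarrow> 's option)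
     \<Rightarrow> 's \<Rightarrow> nat \<Rightarrow> (real \<times> (('s \<times> 's \<times> nat) \<Rightarrow> real) \<Rightarrow> real measure) \<Rightarrow> bool" where
  "unbiased_estimator \<Phi> N P a t K \<longleftrightarrow>
     K \<in> info_space P a t \<rightarrow>\<^sub>M prob_algebra (borel :: real measure) \<and>
     (\<forall>\<tau>. integrable (est_distr \<Phi> N P a t K \<tau>) (\<lambda>y. y) \<and>
          integral\<^sup>L (est_distr \<Phi> N P a t K \<tau>) (\<lambda>y. y) = \<tau>)"

text \<open>Optimal variance V^opt_a(t) at the true parameter tau (estimators of infinite
  variance do not affect the infimum and are omitted).\<close>
definition Vopt :: "('s \<Rightarrow> real \<Rightarrow> real) \<Rightarrow> (real \<Rightarrow> real) \<Rightarrow> (nat \<Rightarrow> 's \<Rightarrow> 's option)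
     \<Rightarrow> real \<Rightarrow> 's \<Rightarrow> nat \<Rightarrow> real" where
  "Vopt \<Phi> N P \<tau> a t =
     Inf {mvar (est_distr \<Phi> N P a t K \<tau>) (\<lambda>y. y) | K.
            unbiased_estimator \<Phi> N P a t K \<and>
            integrable (est_distr \<Phi> N P a t K \<tau>) (\<lambda>y. y\<^sup>2)}"

text \<open>Algorithm ALG: state (opinions x, accuracies c) after t rounds, as a function
  of the underlying randomness.\<close>
primrec alg :: "(nat \<Rightarrow> 's \<Rightarrow> 's option) \<Rightarrow> ('s \<Rightarrow> real \<Rightarrow> real) \<Rightarrow> (real \<Rightarrow> real)
     \<Rightarrow> 's omega \<Rightarrow> nat \<Rightarrow> ('s \<Rightarrow> real) \<times> ('s \<Rightarrow> real)" where
  "alg P \<Phi> N \<omega> 0 = (fst \<omega>, \<lambda>a. 1 / dvar (\<Phi> a))"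
| "alg P \<Phi> N \<omega> (Suc t) =
     (let x = fst (alg P \<Phi> N \<omega> t); c = snd (alg P \<Phi> N \<omega> t);
          ch = (\<lambda>b. c b / (1 + c b * dvar N))
      in (\<lambda>a. case P t a of None \<Rightarrow> x a
             | Some b \<Rightarrow> x a + (x b - x a + snd \<omega> (a, t)) * ch b / (c a + ch b),
          \<lambda>a. case P t a of None \<Rightarrow> c a | Some b \<Rightarrow> c a + ch b))"

definition X_alg :: "(nat \<Rightarrow> 's \<Rightarrow> 's option) \<Rightarrow> ('s \<Rightarrow> real \<Rightarrow> real) \<Rightarrow> (real \<Rightarrow> real)
     \<Rightarrow> 's \<Rightarrow> nat \<Rightarrow> 's omega \<Rightarrow> real" where
  "X_alg P \<Phi> N a t \<omega> = fst (alg P \<Phi> N \<omega> t) a"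

end

theory Submission
  imports Defs
begin


locale gs =
  fixes P :: "nat \<Rightarrow> 's::finite \<Rightarrow> 's option" and \<sigma> :: "'s \<Rightarrow> real" and \<sigma>N :: real
  assumes sig: "\<And>c. \<sigma> c > 0" and sigN: "\<sigma>N > 0"
    and indep: "independent_pattern P"
begin

primrec ccf :: "nat \<Rightarrow> 's \<Rightarrow> real" where
  "ccf 0 = (\<lambda>a. 1 / (\<sigma> a)\<^sup>2)"
| "ccf (Suc t) = (\<lambda>a. case P t a of None \<Rightarrow> ccf t a
      | Some b \<Rightarrow> ccf t a + ccf t b / (1 + ccf t b * \<sigma>N\<^sup>2))"

definition kap :: "nat \<Rightarrow> 's \<Rightarrow> real" where
  "kap t b = 1 / (1 + ccf t b * \<sigma>N\<^sup>2)"

primrec vv :: "nat \<Rightarrow> 's \<Rightarrow> 's \<Rightarrow> real" where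
  "vv 0 = (\<lambda>a c. if c = a then 1 else 0)"
| "vv (Suc t) = (\<lambda>a. case P t a of None \<Rightarrow> vv t a
      | Some b \<Rightarrow> (\<lambda>c. vv t a c + kap t b * vv t b c))"

primrec ww :: "nat \<Rightarrow> 's \<Rightarrow> 's \<times> nat \<Rightarrow> real" where
  "ww 0 = (\<lambda>a e. 0)"
| "ww (Suc t) = (\<lambda>a. case P t a of None \<Rightarrow> ww t a
      | Some b \<Rightarrow> (\<lambda>e. ww t a e + kap t b * ww t b e + (if e = (a, t) then 1 - kap t b else 0)))"

lemma ccf_pos: "ccf t a > 0"
proof (induction t arbitrary: a)
  case 0 then show ?case using sig[of a] by simp
next
  case (Suc t)
  show ?case
  proof (cases "P t a")
    case None then show ?thesis using Suc by simp
  next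
    case (Some b)
    have "ccf t b / (1 + ccf t b * \<sigma>N\<^sup>2) > 0" using Suc[of b] sigN by (simp add: add_pos_nonneg)
    then show ?thesis using Some Suc[of a] by simp
  qed
qed

lemma kap_pos: "0 < kap t b" and kap_le1: "kap t b < 1"
proof -
  have "ccf t b * \<sigma>N\<^sup>2 > 0" using ccf_pos[of t b] sigN by simp
  then show "0 < kap t b" "kap t b < 1" by (auto simp: kap_def)
qed

lemma self_relevant: "a \<in> relevant P t a"
  by (induction t arbitrary: a) (auto split: option.split)

lemma indepD: "P t a = Some b \<Longrightarrow> relevant P t a \<inter> relevant P t b = {}"
  using indep unfolding independent_pattern_def by blast

lemma vv_supp: "vv t a c \<noteq> 0 \<Longrightarrow> c \<in> relevant P t a"
proof (induction t arbitrary: a)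
  case 0 then show ?case by (simp split: if_splits)
next
  case (Suc t)
  show ?case
  proof (cases "P t a")
    case None then show ?thesis using Suc.prems Suc.IH[of a] by auto
  next
    case (Some b)
    then have "vv t a c \<noteq> 0 \<or> vv t b c \<noteq> 0" using Suc.prems by auto
    then show ?thesis using Some Suc.IH[of a] Suc.IH[of b] by auto
  qed
qed

lemma ww_supp: "ww t a (c, r) \<noteq> 0 \<Longrightarrow> c \<in> relevant P t a \<and> r < t"
proof (induction t arbitrary: a)
  case 0 then show ?case by simp
next
  case (Suc t)
  show ?case
  proof (cases "P t a")
    case None then show ?thesis using Suc.prems Suc.IH[of a] by auto
  next
    case (Some b)
    then have "ww t a (c, r) \<noteq> 0 \<or> ww t b (c, r) \<noteq> 0 \<or> (c, r) = (a, t)"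
      using Suc.prems by (auto split: if_splits)
    then show ?thesis using Some Suc.IH[of a] Suc.IH[of b] self_relevant[of a t]
      by auto
  qed
qed

lemma ww_zero: "r \<ge> t \<Longrightarrow> ww t a (c, r) = 0"
  using ww_supp by force

lemma vv_self: "vv t a a = 1"
proof (induction t arbitrary: a)
  case 0 then show ?case by simp
next
  case (Suc t)
  show ?case
  proof (cases "P t a")
    case None then show ?thesis using Suc by auto
  next
    case (Some b)
    have "vv t b a = 0" using vv_supp[of t b a] indepD[OF Some] self_relevant[of a t] by auto
    then show ?thesis using Some Suc by simp
  qed
qed

lemma history_supp: "(c, d, r) \<in> history P t a \<Longrightarrow> c \<in> relevant P t a \<and> d \<in> relevant P t a \<and> r < t"
proof (induction t arbitrary: a)
  case 0 then show ?case by simp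
next
  case (Suc t)
  show ?case
  proof (cases "P t a")
    case None then show ?thesis using Suc.prems Suc.IH[of a] by auto
  next
    case (Some b)
    then show ?thesis using Suc.prems Suc.IH[of a] Suc.IH[of b] self_relevant[of a t] self_relevant[of b t]
      by auto
  qed
qed

lemma finite_history: "finite (history P t a)"
  by (induction t arbitrary: a) (auto split: option.split)

lemma history_inv: "(c, d, r) \<in> history P t a \<Longrightarrow> vv t a d - vv t a c + ww t a (c, r) = 0"
proof (induction t arbitrary: a)
  case 0 then show ?case by simp
next
  case (Suc t)
  show ?case
  proof (cases "P t a")
    case None then show ?thesis using Suc by auto
  next
    case (Some b)
    note dj = indepD[OF Some]
    have h: "(c, d, r) \<in> history P t a \<or> (c, d, r) \<in> history P t b \<or> (c, d, r) = (a, b, t)"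
      using Suc.prems Some by auto
    show ?thesis
    proof -
      { assume H: "(c, d, r) \<in> history P t a"
        note hs = history_supp[OF H]
        have "c \<notin> relevant P t b" "d \<notin> relevant P t b" using hs dj by auto
        then have "vv t b c = 0" "vv t b d = 0" "ww t b (c, r) = 0"
          using vv_supp[of t b] ww_supp[of t b c r] by auto
        moreover have "(c, r) \<noteq> (a, t)" using hs by auto
        ultimately have ?thesis using Some Suc.IH[OF H] by auto }
      moreover
      { assume H: "(c, d, r) \<in> history P t b"
        note hs = history_supp[OF H]
        have "c \<notin> relevant P t a" "d \<notin> relevant P t a" using hs dj by auto
        then have "vv t a c = 0" "vv t a d = 0" "ww t a (c, r) = 0"
          using vv_supp[of t a] ww_supp[of t a c r] by auto
        moreover have "(c, r) \<noteq> (a, t)" using hs by auto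
        moreover have "vv t b d - vv t b c + ww t b (c, r) = 0" using Suc.IH[OF H] .
        moreover have "(c, r) \<noteq> (a, t)" using hs by auto
        ultimately have "vv (Suc t) a d - vv (Suc t) a c + ww (Suc t) a (c, r)
           = kap t b * (vv t b d - vv t b c + ww t b (c, r))" using Some
          by (simp add: algebra_simps del: prod.inject) (metis distrib_left)
        then have ?thesis using \<open>vv t b d - vv t b c + ww t b (c, r) = 0\<close> by simp }
      moreover
      { assume H: "(c, d, r) = (a, b, t)"
        have "b \<notin> relevant P t a" "a \<notin> relevant P t b"
          using dj self_relevant[of a t] self_relevant[of b t] by auto
        then have "vv t a b = 0" "vv t b a = 0" using vv_supp by auto
        moreover have "ww t a (a, t) = 0" "ww t b (a, t) = 0" using ww_zero by auto
        ultimately have ?thesis using Some H vv_self[of t a] vv_self[of t b] by simp }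
      ultimately show ?thesis using h by blast
    qed
  qed
qed


lemma kap_alg:
  fixes c s :: real assumes "c > 0" "s > 0"
  shows "(1 / (1 + c * s))\<^sup>2 * c + (1 - 1 / (1 + c * s))\<^sup>2 / s = c / (1 + c * s)"
proof -
  have D: "1 + c * s > 0" using assms by (simp add: add_pos_nonneg)
  have e1: "1 - 1 / (1 + c * s) = c * s / (1 + c * s)" using D by (simp add: field_simps)
  have e2: "(c * s / (1 + c * s))\<^sup>2 / s = c * (c * s) / (1 + c * s)\<^sup>2"
    using assms by (simp add: power2_eq_square)
  have e3: "(1 / (1 + c * s))\<^sup>2 * c = c / (1 + c * s)\<^sup>2" by (simp add: power_divide)
  have "c / (1 + c * s)\<^sup>2 + c * (c * s) / (1 + c * s)\<^sup>2 = c * (1 + c * s) / (1 + c * s)\<^sup>2"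
    by (simp add: add_divide_distrib[symmetric] algebra_simps)
  also have "\<dots> = c / (1 + c * s)" using D by (simp add: power2_eq_square)
  finally show ?thesis using e1 e2 e3 by simp
qed

definition II :: "nat \<Rightarrow> 's \<Rightarrow> real" where
  "II t a = (\<Sum>c\<in>UNIV. (vv t a c)\<^sup>2 / (\<sigma> c)\<^sup>2) + (\<Sum>e\<in>UNIV \<times> {..<t}. (ww t a e)\<^sup>2 / \<sigma>N\<^sup>2)"

lemma sum_ext_Suc:
  assumes "\<And>c. f (c, t) = 0"
  shows "(\<Sum>e\<in>UNIV \<times> {..<Suc t}. f e) = (\<Sum>e\<in>(UNIV::'s set) \<times> {..<t}. f e)"
proof -
  have "(\<Sum>e\<in>(UNIV::'s set) \<times> {..<t}. f e) = (\<Sum>e\<in>UNIV \<times> {..<Suc t}. f e)"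
    by (rule sum.mono_neutral_left) (use assms in \<open>auto simp: less_Suc_eq\<close>)
  then show ?thesis by simp
qed

lemma II_ccf: "II t a = ccf t a"
proof (induction t arbitrary: a)
  case 0
  have "(\<lambda>c. (vv 0 a c)\<^sup>2 / (\<sigma> c)\<^sup>2) = (\<lambda>c. if c = a then 1 / (\<sigma> a)\<^sup>2 else 0)" by auto
  then have "(\<Sum>c\<in>UNIV. (vv 0 a c)\<^sup>2 / (\<sigma> c)\<^sup>2) = 1 / (\<sigma> a)\<^sup>2"
    by (simp only:) simp
  then show ?case by (simp add: II_def)
next
  case (Suc t)
  show ?case
  proof (cases "P t a")
    case None
    have "(\<Sum>e\<in>UNIV \<times> {..<Suc t}. (ww t a e)\<^sup>2 / \<sigma>N\<^sup>2) = (\<Sum>e\<in>UNIV \<times> {..<t}. (ww t a e)\<^sup>2 / \<sigma>N\<^sup>2)"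
      by (rule sum_ext_Suc) (simp add: ww_zero)
    then show ?thesis using None Suc[of a] by (simp add: II_def)
  next
    case (Some b)
    note dj = indepD[OF Some]
    define k where "k = kap t b"
    have vc: "vv t a c * vv t b c = 0" for c
      using vv_supp[of t a c] vv_supp[of t b c] dj by auto
    have wc: "ww t a e * ww t b e = 0" for e
      using ww_supp[of t a "fst e" "snd e"] ww_supp[of t b "fst e" "snd e"] dj by auto
    have v1: "(vv (Suc t) a c)\<^sup>2 / (\<sigma> c)\<^sup>2 = (vv t a c)\<^sup>2 / (\<sigma> c)\<^sup>2 + k\<^sup>2 * ((vv t b c)\<^sup>2 / (\<sigma> c)\<^sup>2)" for c
    proof -
      have "(vv (Suc t) a c)\<^sup>2 = (vv t a c)\<^sup>2 + k\<^sup>2 * (vv t b c)\<^sup>2 + 2 * k * (vv t a c * vv t b c)"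
        using Some by (simp add: k_def power2_eq_square algebra_simps)
      then show ?thesis using vc[of c] by (simp add: add_divide_distrib)
    qed
    define \<delta> where "\<delta> = (\<lambda>e::'s \<times> nat. if e = (a, t) then 1 - k else 0)"
    have w1: "(ww (Suc t) a e)\<^sup>2 / \<sigma>N\<^sup>2 = (ww t a e)\<^sup>2 / \<sigma>N\<^sup>2 + k\<^sup>2 * ((ww t b e)\<^sup>2 / \<sigma>N\<^sup>2) + (\<delta> e)\<^sup>2 / \<sigma>N\<^sup>2" for e
    proof -
      have z1: "ww t a e * \<delta> e = 0" "ww t b e * \<delta> e = 0"
        using ww_zero[of t t a a] ww_zero[of t t b a] by (auto simp: \<delta>_def)
      have "(ww (Suc t) a e)\<^sup>2 = (ww t a e)\<^sup>2 + k\<^sup>2 * (ww t b e)\<^sup>2 + (\<delta> e)\<^sup>2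
           + 2 * k * (ww t a e * ww t b e) + 2 * (ww t a e * \<delta> e) + 2 * k * (ww t b e * \<delta> e)"
        using Some by (simp add: k_def \<delta>_def power2_eq_square algebra_simps)
      then show ?thesis using wc[of e] z1 by (simp add: add_divide_distrib)
    qed
    have sv: "(\<Sum>c\<in>UNIV. (vv (Suc t) a c)\<^sup>2 / (\<sigma> c)\<^sup>2) = (\<Sum>c\<in>UNIV. (vv t a c)\<^sup>2 / (\<sigma> c)\<^sup>2) + k\<^sup>2 * (\<Sum>c\<in>UNIV. (vv t b c)\<^sup>2 / (\<sigma> c)\<^sup>2)"
      unfolding v1 by (simp add: sum.distrib sum_distrib_left)
    have sd: "(\<Sum>e\<in>UNIV \<times> {..<Suc t}. (\<delta> e)\<^sup>2 / \<sigma>N\<^sup>2) = (1 - k)\<^sup>2 / \<sigma>N\<^sup>2"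
    proof -
      have "(\<Sum>e\<in>UNIV \<times> {..<Suc t}. (\<delta> e)\<^sup>2 / \<sigma>N\<^sup>2) = (\<Sum>e\<in>{(a, t)}. (\<delta> e)\<^sup>2 / \<sigma>N\<^sup>2)"
        by (rule sum.mono_neutral_right) (auto simp: \<delta>_def)
      then show ?thesis by (simp add: \<delta>_def)
    qed
    have sw: "(\<Sum>e\<in>UNIV \<times> {..<Suc t}. (ww (Suc t) a e)\<^sup>2 / \<sigma>N\<^sup>2) =
       (\<Sum>e\<in>UNIV \<times> {..<t}. (ww t a e)\<^sup>2 / \<sigma>N\<^sup>2) + k\<^sup>2 * (\<Sum>e\<in>UNIV \<times> {..<t}. (ww t b e)\<^sup>2 / \<sigma>N\<^sup>2)
        + (1 - k)\<^sup>2 / \<sigma>N\<^sup>2"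
    proof -
      have e1: "(\<Sum>e\<in>UNIV \<times> {..<Suc t}. (ww t a e)\<^sup>2 / \<sigma>N\<^sup>2) = (\<Sum>e\<in>UNIV \<times> {..<t}. (ww t a e)\<^sup>2 / \<sigma>N\<^sup>2)"
        by (rule sum_ext_Suc) (simp add: ww_zero)
      have e2: "(\<Sum>e\<in>UNIV \<times> {..<Suc t}. (ww t b e)\<^sup>2 / \<sigma>N\<^sup>2) = (\<Sum>e\<in>UNIV \<times> {..<t}. (ww t b e)\<^sup>2 / \<sigma>N\<^sup>2)"
        by (rule sum_ext_Suc) (simp add: ww_zero)
      show ?thesis unfolding w1 sum.distrib sum_distrib_left[symmetric] using sd e1 e2 by simp
    qed
    have cb: "ccf t b > 0" using ccf_pos .
    have "II (Suc t) a = ccf t a + k\<^sup>2 * ccf t b + (1 - k)\<^sup>2 / \<sigma>N\<^sup>2"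
      unfolding II_def sv sw using Suc[of a] Suc[of b] unfolding II_def
      by (simp add: algebra_simps flip: distrib_left)
    also have "\<dots> = ccf t a + ccf t b / (1 + ccf t b * \<sigma>N\<^sup>2)"
    proof -
      have pos: "1 + ccf t b * \<sigma>N\<^sup>2 > 0" using cb sigN by (simp add: add_pos_nonneg)
      have "k\<^sup>2 * ccf t b + (1 - k)\<^sup>2 / \<sigma>N\<^sup>2 = ccf t b / (1 + ccf t b * \<sigma>N\<^sup>2)"
        unfolding k_def kap_def by (rule kap_alg) (use cb sigN in auto)
      then show ?thesis by simp
    qed
    finally show ?thesis using Some by simp
  qed
qed


definition chat :: "nat \<Rightarrow> 's \<Rightarrow> real" where
  "chat t b = ccf t b / (1 + ccf t b * \<sigma>N\<^sup>2)"

definition qq :: "nat \<Rightarrow> 's \<Rightarrow> 's \<Rightarrow> real" where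
  "qq t a b = chat t b / (ccf t a + chat t b)"

primrec beta :: "nat \<Rightarrow> 's \<Rightarrow> 's \<times> 's \<times> nat \<Rightarrow> real" where
  "beta 0 = (\<lambda>a e. 0)"
| "beta (Suc t) = (\<lambda>a. case P t a of None \<Rightarrow> beta t a
      | Some b \<Rightarrow> (\<lambda>e. (1 - qq t a b) * beta t a e + qq t a b * beta t b e
                      + (if e = (a, b, t) then qq t a b else 0)))"

lemma beta_supp: "beta t a e \<noteq> 0 \<Longrightarrow> e \<in> history P t a"
proof (induction t arbitrary: a)
  case 0 then show ?case by simp
next
  case (Suc t)
  show ?case
  proof (cases "P t a")
    case None then show ?thesis using Suc.prems Suc.IH[of a] by auto
  next
    case (Some b)
    then have "beta t a e \<noteq> 0 \<or> beta t b e \<noteq> 0 \<or> e = (a, b, t)"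
      using Suc.prems by (auto split: if_splits)
    then show ?thesis using Some Suc.IH[of a] Suc.IH[of b] by auto
  qed
qed

definition Sc :: "real \<Rightarrow> nat \<Rightarrow> 's \<Rightarrow> 's omega \<Rightarrow> real" where
  "Sc \<tau> t a \<omega> = (\<Sum>c\<in>UNIV. vv t a c * (fst \<omega> c - \<tau>) / (\<sigma> c)\<^sup>2)
      + (\<Sum>e\<in>UNIV \<times> {..<t}. ww t a e * snd \<omega> e / \<sigma>N\<^sup>2)"

lemma Sc_Suc:
  assumes "P t a = Some b"
  shows "Sc \<tau> (Suc t) a \<omega> = Sc \<tau> t a \<omega> + kap t b * Sc \<tau> t b \<omega> + (1 - kap t b) * snd \<omega> (a, t) / \<sigma>N\<^sup>2"
proof -
  define k where "k = kap t b"
  have s1: "(\<Sum>c\<in>UNIV. vv (Suc t) a c * (fst \<omega> c - \<tau>) / (\<sigma> c)\<^sup>2) =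
     (\<Sum>c\<in>UNIV. vv t a c * (fst \<omega> c - \<tau>) / (\<sigma> c)\<^sup>2) + k * (\<Sum>c\<in>UNIV. vv t b c * (fst \<omega> c - \<tau>) / (\<sigma> c)\<^sup>2)"
  proof -
    have pw: "vv (Suc t) a c * (fst \<omega> c - \<tau>) / (\<sigma> c)\<^sup>2 = vv t a c * (fst \<omega> c - \<tau>) / (\<sigma> c)\<^sup>2
       + k * (vv t b c * (fst \<omega> c - \<tau>) / (\<sigma> c)\<^sup>2)" for c
      using assms sig[of c] by (simp add: k_def field_simps)
    show ?thesis unfolding pw sum.distrib sum_distrib_left ..
  qed
  define \<delta> where "\<delta> = (\<lambda>e::'s \<times> nat. if e = (a, t) then 1 - k else 0)"
  have w: "ww (Suc t) a e = ww t a e + k * ww t b e + \<delta> e" for e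
    using assms by (simp add: k_def \<delta>_def)
  have e1: "(\<Sum>e\<in>UNIV \<times> {..<Suc t}. ww t a e * snd \<omega> e / \<sigma>N\<^sup>2) = (\<Sum>e\<in>UNIV \<times> {..<t}. ww t a e * snd \<omega> e / \<sigma>N\<^sup>2)"
    by (rule sum_ext_Suc) (simp add: ww_zero)
  have e2: "(\<Sum>e\<in>UNIV \<times> {..<Suc t}. ww t b e * snd \<omega> e / \<sigma>N\<^sup>2) = (\<Sum>e\<in>UNIV \<times> {..<t}. ww t b e * snd \<omega> e / \<sigma>N\<^sup>2)"
    by (rule sum_ext_Suc) (simp add: ww_zero)
  have e3: "(\<Sum>e\<in>UNIV \<times> {..<Suc t}. \<delta> e * snd \<omega> e / \<sigma>N\<^sup>2) = (1 - k) * snd \<omega> (a, t) / \<sigma>N\<^sup>2"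
  proof -
    have "(\<Sum>e\<in>UNIV \<times> {..<Suc t}. \<delta> e * snd \<omega> e / \<sigma>N\<^sup>2) = (\<Sum>e\<in>{(a, t)}. \<delta> e * snd \<omega> e / \<sigma>N\<^sup>2)"
      by (rule sum.mono_neutral_right) (auto simp: \<delta>_def)
    then show ?thesis by (simp add: \<delta>_def)
  qed
  have "(\<Sum>e\<in>UNIV \<times> {..<Suc t}. ww (Suc t) a e * snd \<omega> e / \<sigma>N\<^sup>2) =
      (\<Sum>e\<in>UNIV \<times> {..<Suc t}. ww t a e * snd \<omega> e / \<sigma>N\<^sup>2)
    + k * (\<Sum>e\<in>UNIV \<times> {..<Suc t}. ww t b e * snd \<omega> e / \<sigma>N\<^sup>2)
    + (\<Sum>e\<in>UNIV \<times> {..<Suc t}. \<delta> e * snd \<omega> e / \<sigma>N\<^sup>2)"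
    unfolding w by (simp add: sum.distrib sum_distrib_left algebra_simps add_divide_distrib)
  then show ?thesis unfolding Sc_def using s1 e1 e2 e3 by (simp add: k_def algebra_simps)
qed

end

locale gs2 = gs P \<sigma> \<sigma>N for P :: "nat \<Rightarrow> 's::finite \<Rightarrow> 's option" and \<sigma> \<sigma>N +
  fixes \<Phi> :: "'s \<Rightarrow> real \<Rightarrow> real" and N :: "real \<Rightarrow> real"
  assumes dvPhi: "\<And>c. dvar (\<Phi> c) = (\<sigma> c)\<^sup>2" and dvN: "dvar N = \<sigma>N\<^sup>2"
begin

lemma alg_snd: "snd (alg P \<Phi> N \<omega> t) = ccf t"
  by (induction t) (auto simp: Let_def dvPhi dvN fun_eq_iff split: option.split)

lemma alg_fst_beta:
  "fst (alg P \<Phi> N \<omega> t) a = fst \<omega> a + (\<Sum>e\<in>history P t a. beta t a e * Dobs \<omega> e)"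
proof (induction t arbitrary: a)
  case 0 then show ?case by simp
next
  case (Suc t)
  show ?case
  proof (cases "P t a")
    case None then show ?thesis using Suc[of a] by (simp add: Let_def)
  next
    case (Some b)
    define q where "q = qq t a b"
    define H where "H = history P t a \<union> history P t b \<union> {(a, b, t)}"
    have H: "history P (Suc t) a = H" using Some by (simp add: H_def)
    have fH: "finite H" using finite_history by (simp add: H_def)
    have sa: "(\<Sum>e\<in>H. beta t a e * Dobs \<omega> e) = (\<Sum>e\<in>history P t a. beta t a e * Dobs \<omega> e)"
      by (rule sum.mono_neutral_right[OF fH]) (auto simp: H_def dest: beta_supp)
    have sb: "(\<Sum>e\<in>H. beta t b e * Dobs \<omega> e) = (\<Sum>e\<in>history P t b. beta t b e * Dobs \<omega> e)"
      by (rule sum.mono_neutral_right[OF fH]) (auto simp: H_def dest: beta_supp)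
    have sd: "(\<Sum>e\<in>H. (if e = (a, b, t) then q else 0) * Dobs \<omega> e) = q * Dobs \<omega> (a, b, t)"
    proof -
      have "(\<Sum>e\<in>H. (if e = (a, b, t) then q else 0) * Dobs \<omega> e) = (\<Sum>e\<in>{(a, b, t)}. (if e = (a, b, t) then q else 0) * Dobs \<omega> e)"
        by (rule sum.mono_neutral_right[OF fH]) (auto simp: H_def)
      then show ?thesis by simp
    qed
    have "(\<Sum>e\<in>H. beta (Suc t) a e * Dobs \<omega> e) = (1 - q) * (\<Sum>e\<in>H. beta t a e * Dobs \<omega> e)
       + q * (\<Sum>e\<in>H. beta t b e * Dobs \<omega> e) + (\<Sum>e\<in>H. (if e = (a, b, t) then q else 0) * Dobs \<omega> e)"
    proof -
      have pw: "beta (Suc t) a e * Dobs \<omega> e = (1 - q) * (beta t a e * Dobs \<omega> e) + q * (beta t b e * Dobs \<omega> e)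
          + (if e = (a, b, t) then q else 0) * Dobs \<omega> e" for e
        using Some by (simp add: q_def algebra_simps)
      show ?thesis unfolding pw sum.distrib sum_distrib_left ..
    qed
    then have eq: "(\<Sum>e\<in>H. beta (Suc t) a e * Dobs \<omega> e) = (1 - q) * (\<Sum>e\<in>history P t a. beta t a e * Dobs \<omega> e)
       + q * (\<Sum>e\<in>history P t b. beta t b e * Dobs \<omega> e) + q * Dobs \<omega> (a, b, t)"
      using sa sb sd by simp
    have qdef: "chat t b / (ccf t a + chat t b) = q" by (simp add: q_def qq_def)
    have "fst (alg P \<Phi> N \<omega> (Suc t)) a = fst (alg P \<Phi> N \<omega> t) a
        + (fst (alg P \<Phi> N \<omega> t) b - fst (alg P \<Phi> N \<omega> t) a + snd \<omega> (a, t)) * q"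
      using Some by (simp add: Let_def alg_snd chat_def dvN qdef[symmetric] dvPhi)
    also have "\<dots> = fst \<omega> a + (\<Sum>e\<in>H. beta (Suc t) a e * Dobs \<omega> e)"
      unfolding eq Suc[of a] Suc[of b] by (simp add: Dobs_def algebra_simps)
    finally show ?thesis using H by simp
  qed
qed


lemma alg_step_algebra:
  fixes ca cb s Sa Sb \<eta> \<tau> :: real
  assumes "ca > 0" "cb > 0" "s > 0"
  shows "(\<tau> + Sa / ca) + ((\<tau> + Sb / cb) - (\<tau> + Sa / ca) + \<eta>) * ((cb / (1 + cb * s)) / (ca + cb / (1 + cb * s)))
     = \<tau> + (Sa + (1 / (1 + cb * s)) * Sb + (1 - 1 / (1 + cb * s)) * \<eta> / s) / (ca + cb / (1 + cb * s))"
proof -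
  define D where "D = 1 + cb * s"
  have D: "D > 0" using assms by (simp add: D_def add_pos_nonneg)
  define ch where "ch = cb / D"
  have ch: "ch > 0" using assms D by (simp add: ch_def)
  have k1: "(1 / D) * Sb = ch * (Sb / cb)" using assms by (simp add: ch_def)
  have k2: "(1 - 1 / D) * \<eta> / s = ch * \<eta>"
  proof -
    have "1 - 1 / D = cb * s / D" using D by (simp add: D_def field_simps)
    then show ?thesis using assms by (simp add: ch_def)
  qed
  have cc: "ca + ch > 0" using assms ch by simp
  have "(\<tau> + Sa / ca) + ((\<tau> + Sb / cb) - (\<tau> + Sa / ca) + \<eta>) * (ch / (ca + ch))
      = \<tau> + (Sa / ca * (ca + ch) + (Sb / cb - Sa / ca + \<eta>) * ch) / (ca + ch)"
    using cc by (simp add: field_simps)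
  also have "Sa / ca * (ca + ch) + (Sb / cb - Sa / ca + \<eta>) * ch = Sa + ch * (Sb / cb) + ch * \<eta>"
    using assms by (simp add: field_simps)
  finally show ?thesis unfolding D_def[symmetric] ch_def[symmetric] using k1 k2 by simp
qed

lemma alg_fst_Sc: "fst (alg P \<Phi> N \<omega> t) a = \<tau> + Sc \<tau> t a \<omega> / ccf t a"
proof (induction t arbitrary: a)
  case 0
  have "Sc \<tau> 0 a \<omega> = (fst \<omega> a - \<tau>) / (\<sigma> a)\<^sup>2"
  proof -
    have "(\<lambda>c. vv 0 a c * (fst \<omega> c - \<tau>) / (\<sigma> c)\<^sup>2) = (\<lambda>c. if c = a then (fst \<omega> a - \<tau>) / (\<sigma> a)\<^sup>2 else 0)"
      by auto
    then have "(\<Sum>c\<in>UNIV. vv 0 a c * (fst \<omega> c - \<tau>) / (\<sigma> c)\<^sup>2) = (fst \<omega> a - \<tau>) / (\<sigma> a)\<^sup>2"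
      by (simp only:) simp
    then show ?thesis by (simp add: Sc_def)
  qed
  then show ?case using sig[of a] by simp
next
  case (Suc t)
  show ?case
  proof (cases "P t a")
    case None
    have "Sc \<tau> (Suc t) a \<omega> = Sc \<tau> t a \<omega>"
    proof -
      have "(\<Sum>e\<in>UNIV \<times> {..<Suc t}. ww t a e * snd \<omega> e / \<sigma>N\<^sup>2) = (\<Sum>e\<in>UNIV \<times> {..<t}. ww t a e * snd \<omega> e / \<sigma>N\<^sup>2)"
        by (rule sum_ext_Suc) (simp add: ww_zero)
      then show ?thesis using None by (simp add: Sc_def)
    qed
    then show ?thesis using None Suc[of a] by (simp add: Let_def)
  next
    case (Some b)
    have "fst (alg P \<Phi> N \<omega> (Suc t)) a = fst (alg P \<Phi> N \<omega> t) a
        + (fst (alg P \<Phi> N \<omega> t) b - fst (alg P \<Phi> N \<omega> t) a + snd \<omega> (a, t)) * ((ccf t b / (1 + ccf t b * \<sigma>N\<^sup>2)) / (ccf t a + ccf t b / (1 + ccf t b * \<sigma>N\<^sup>2)))"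
      using Some by (simp add: Let_def alg_snd dvN dvPhi)
    also have "\<dots> = \<tau> + Sc \<tau> (Suc t) a \<omega> / ccf (Suc t) a"
      unfolding Suc[of a] Suc[of b] Sc_Suc[OF Some] kap_def ccf.simps(2) Some option.simps(5)
      by (rule alg_step_algebra) (use ccf_pos sigN in auto)
    finally show ?thesis .
  qed
qed

end


abbreviation NM :: "real \<Rightarrow> real \<Rightarrow> real measure" where
  "NM \<mu> \<sigma> \<equiv> dens_measure (normal_density \<mu> \<sigma>)"

lemma NM_def': "NM \<mu> \<sigma> = density lborel (\<lambda>x. ennreal (normal_density \<mu> \<sigma> x))"
  by (simp add: dens_measure_def)

lemma sets_NM[simp, measurable_cong]: "sets (NM \<mu> \<sigma>) = sets borel"
  by (simp add: dens_measure_def)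

lemma space_NM[simp]: "space (NM \<mu> \<sigma>) = UNIV"
  by (simp add: dens_measure_def)

lemma prob_NM: "\<sigma> > 0 \<Longrightarrow> prob_space (NM \<mu> \<sigma>)"
  unfolding dens_measure_def by (rule prob_space_normal_density)

lemma normal_density_shift: "normal_density \<mu> \<sigma> (c + x) = normal_density (\<mu> - c) \<sigma> x"
  by (simp add: normal_density_def algebra_simps)

lemma NM_shift:
  assumes "\<sigma> > 0"
  shows "distr (NM \<mu> \<sigma>) borel (\<lambda>x. x + c) = NM (\<mu> + c) \<sigma>"
proof -
  have "NM (\<mu> + c) \<sigma> = density (distr lborel borel ((+) c)) (\<lambda>x. ennreal (normal_density (\<mu> + c) \<sigma> x))"
    by (simp add: lborel_distr_plus dens_measure_def)
  also have "\<dots> = distr (density lborel (\<lambda>x. ennreal (normal_density (\<mu> + c) \<sigma> (c + x)))) borel ((+) c)"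
    by (rule density_distr) auto
  also have "\<dots> = distr (NM \<mu> \<sigma>) borel (\<lambda>x. x + c)"
  proof -
    have "(\<lambda>x. ennreal (normal_density (\<mu> + c) \<sigma> (c + x))) = (\<lambda>x. ennreal (normal_density \<mu> \<sigma> x))"
      by (simp add: normal_density_def)
    moreover have "((+) c) = (\<lambda>x. x + c)" by auto
    ultimately show ?thesis by (simp only: dens_measure_def)
  qed
  finally show ?thesis ..
qed

lemma normal_density_ratio:
  assumes "\<sigma> > 0"
  shows "normal_density (\<mu> + c) \<sigma> x = normal_density \<mu> \<sigma> x * exp (c * (x - \<mu>) / \<sigma>\<^sup>2 - c\<^sup>2 / (2 * \<sigma>\<^sup>2))"
proof -
  have e: "exp (-(x - (\<mu> + c))\<^sup>2 / (2 * \<sigma>\<^sup>2)) = exp (-(x - \<mu>)\<^sup>2 / (2 * \<sigma>\<^sup>2)) * exp (c * (x - \<mu>) / \<sigma>\<^sup>2 - c\<^sup>2 / (2 * \<sigma>\<^sup>2))"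
    unfolding exp_add[symmetric] by (rule arg_cong[where f=exp]) (use assms in \<open>simp add: field_simps power2_eq_square\<close>)
  show ?thesis unfolding normal_density_def e by simp
qed

lemma NM_density:
  assumes "\<sigma> > 0"
  shows "NM (\<mu> + c) \<sigma> = density (NM \<mu> \<sigma>) (\<lambda>x. ennreal (exp (c * (x - \<mu>) / \<sigma>\<^sup>2 - c\<^sup>2 / (2 * \<sigma>\<^sup>2))))"
  unfolding dens_measure_def
  by (subst density_density_eq) (auto simp: normal_density_ratio[OF assms] ennreal_mult normal_density_nonneg)


abbreviation PM :: "'i set \<Rightarrow> ('i \<Rightarrow> real) \<Rightarrow> ('i \<Rightarrow> real) \<Rightarrow> ('i \<Rightarrow> real) measure" where
  "PM I \<mu> \<sigma> \<equiv> PiM I (\<lambda>i. NM (\<mu> i) (\<sigma> i))"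

lemma PM_prob: "(\<And>i. \<sigma> i > 0) \<Longrightarrow> product_prob_space (\<lambda>i. NM (\<mu> i) (\<sigma> i))"
  by (intro product_prob_spaceI prob_NM)

lemma sets_PM: "sets (PM I \<mu> \<sigma>) = sets (PM I \<mu>' \<sigma>')"
  by (intro sets_PiM_cong) auto

lemma shift_meas[measurable]: "(\<lambda>x. \<lambda>i\<in>I. x i + c i) \<in> PM I \<mu> \<sigma> \<rightarrow>\<^sub>M PM I \<mu>' \<sigma>'"
  by (rule measurable_restrict) (simp add: measurable_component_singleton)

lemma PM_shift:
  assumes I: "finite I" and sig: "\<And>i. \<sigma> i > 0"
  shows "distr (PM I \<mu> \<sigma>) (PM I \<mu> \<sigma>) (\<lambda>x. \<lambda>i\<in>I. x i + c i) = PM I (\<lambda>i. \<mu> i + c i) \<sigma>"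
proof -
  interpret T: product_prob_space "\<lambda>i. NM (\<mu> i + c i) (\<sigma> i)" by (rule PM_prob) (rule sig)
  interpret S: product_prob_space "\<lambda>i. NM (\<mu> i) (\<sigma> i)" by (rule PM_prob) (rule sig)
  show ?thesis
  proof (rule T.PiM_eqI[OF I])
    show "sets (distr (PM I \<mu> \<sigma>) (PM I \<mu> \<sigma>) (\<lambda>x. \<lambda>i\<in>I. x i + c i)) = sets (PM I (\<lambda>i. \<mu> i + c i) \<sigma>)"
      by (simp add: sets_PM)
    fix A assume A: "\<And>i. i \<in> I \<Longrightarrow> A i \<in> sets (NM (\<mu> i + c i) (\<sigma> i))"
    have "emeasure (distr (PM I \<mu> \<sigma>) (PM I \<mu> \<sigma>) (\<lambda>x. \<lambda>i\<in>I. x i + c i)) (Pi\<^sub>E I A)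
       = emeasure (PM I \<mu> \<sigma>) ((\<lambda>x. \<lambda>i\<in>I. x i + c i) -` Pi\<^sub>E I A \<inter> space (PM I \<mu> \<sigma>))"
      by (rule emeasure_distr) (use A I in auto)
    also have "(\<lambda>x. \<lambda>i\<in>I. x i + c i) -` Pi\<^sub>E I A \<inter> space (PM I \<mu> \<sigma>) = Pi\<^sub>E I (\<lambda>i. (\<lambda>x. x + c i) -` A i)"
      by (auto simp: space_PiM PiE_def Pi_def extensional_def)
    also have "emeasure (PM I \<mu> \<sigma>) (Pi\<^sub>E I (\<lambda>i. (\<lambda>x. x + c i) -` A i)) = (\<Prod>i\<in>I. emeasure (NM (\<mu> i) (\<sigma> i)) ((\<lambda>x. x + c i) -` A i))"
    proof (rule S.emeasure_PiM[OF I])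
      fix i assume "i \<in> I"
      then have "A i \<in> sets borel" using A by simp
      then have "(\<lambda>x. x + c i) -` A i \<inter> space borel \<in> sets borel"
        by (intro measurable_sets[where A=borel]) auto
      then show "(\<lambda>x. x + c i) -` A i \<in> sets (NM (\<mu> i) (\<sigma> i))" by simp
    qed
    also have "\<dots> = (\<Prod>i\<in>I. emeasure (NM (\<mu> i + c i) (\<sigma> i)) (A i))"
    proof (rule prod.cong[OF refl])
      fix i assume i: "i \<in> I"
      have "emeasure (NM (\<mu> i + c i) (\<sigma> i)) (A i) = emeasure (distr (NM (\<mu> i) (\<sigma> i)) borel (\<lambda>x. x + c i)) (A i)"
        by (simp add: NM_shift sig)
      also have "\<dots> = emeasure (NM (\<mu> i) (\<sigma> i)) ((\<lambda>x. x + c i) -` A i)"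
        by (subst emeasure_distr) (use A i in auto)
      finally show "emeasure (NM (\<mu> i) (\<sigma> i)) ((\<lambda>x. x + c i) -` A i) = emeasure (NM (\<mu> i + c i) (\<sigma> i)) (A i)" ..
    qed
    finally show "emeasure (distr (PM I \<mu> \<sigma>) (PM I \<mu> \<sigma>) (\<lambda>x. \<lambda>i\<in>I. x i + c i)) (Pi\<^sub>E I A) = (\<Prod>i\<in>I. emeasure (NM (\<mu> i + c i) (\<sigma> i)) (A i))" .
  qed
qed


lemma indicator_PiE_prod:
  assumes "finite I" "x \<in> extensional I"
  shows "(indicator (Pi\<^sub>E I A) x :: ennreal) = (\<Prod>i\<in>I. indicator (A i) (x i))"
proof (cases "x \<in> Pi\<^sub>E I A")
  case True
  then have "\<forall>i\<in>I. x i \<in> A i" by (auto simp: PiE_def)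
  then show ?thesis using True by (simp add: indicator_def)
next
  case False
  then obtain i where "i \<in> I" "x i \<notin> A i" using assms by (auto simp: PiE_def Pi_def)
  then show ?thesis using False assms by (auto simp: indicator_def intro!: prod_zero[symmetric])
qed

lemma PM_density:
  assumes I: "finite I" and sig: "\<And>i. \<sigma> i > 0"
  shows "PM I (\<lambda>i. \<mu> i + c i) \<sigma> = density (PM I \<mu> \<sigma>)
     (\<lambda>x. \<Prod>i\<in>I. ennreal (exp (c i * (x i - \<mu> i) / (\<sigma> i)\<^sup>2 - (c i)\<^sup>2 / (2 * (\<sigma> i)\<^sup>2))))"
    (is "_ = density _ ?f")
proof -
  interpret T: product_prob_space "\<lambda>i. NM (\<mu> i + c i) (\<sigma> i)" by (rule PM_prob) (rule sig)
  interpret S: product_prob_space "\<lambda>i. NM (\<mu> i) (\<sigma> i)" by (rule PM_prob) (rule sig)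
  define w where "w i y = ennreal (exp (c i * (y - \<mu> i) / (\<sigma> i)\<^sup>2 - (c i)\<^sup>2 / (2 * (\<sigma> i)\<^sup>2)))" for i y
  have fw: "?f = (\<lambda>x. \<Prod>i\<in>I. w i (x i))" by (simp add: w_def)
  have [measurable]: "w i \<in> borel_measurable borel" for i unfolding w_def by measurable
  show ?thesis
  proof (rule T.PiM_eqI[OF I, symmetric])
    show "sets (density (PM I \<mu> \<sigma>) ?f) = sets (PM I (\<lambda>i. \<mu> i + c i) \<sigma>)"
      by (simp add: sets_PM)
    fix A assume A: "\<And>i. i \<in> I \<Longrightarrow> A i \<in> sets (NM (\<mu> i + c i) (\<sigma> i))"
    have PA: "Pi\<^sub>E I A \<in> sets (PM I \<mu> \<sigma>)" by (rule sets_PiM_I_finite[OF I]) (use A in auto)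
    have "emeasure (density (PM I \<mu> \<sigma>) ?f) (Pi\<^sub>E I A) = (\<integral>\<^sup>+x. ?f x * indicator (Pi\<^sub>E I A) x \<partial>PM I \<mu> \<sigma>)"
      by (rule emeasure_density[OF _ PA]) (simp add: fw)
    also have "\<dots> = (\<integral>\<^sup>+x. (\<Prod>i\<in>I. w i (x i) * indicator (A i) (x i)) \<partial>PM I \<mu> \<sigma>)"
    proof (rule nn_integral_cong)
      fix x assume "x \<in> space (PM I \<mu> \<sigma>)"
      then have "x \<in> extensional I" by (simp add: space_PiM PiE_def)
      then show "?f x * indicator (Pi\<^sub>E I A) x = (\<Prod>i\<in>I. w i (x i) * indicator (A i) (x i))"
        by (subst indicator_PiE_prod[OF I]) (simp_all add: prod.distrib w_def)
    qed
    also have "\<dots> = (\<Prod>i\<in>I. (\<integral>\<^sup>+y. w i y * indicator (A i) y \<partial>NM (\<mu> i) (\<sigma> i)))"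
      by (rule S.product_nn_integral_prod[OF I]) (use A in auto)
    also have "\<dots> = (\<Prod>i\<in>I. emeasure (NM (\<mu> i + c i) (\<sigma> i)) (A i))"
    proof (rule prod.cong[OF refl])
      fix i assume i: "i \<in> I"
      have "emeasure (NM (\<mu> i + c i) (\<sigma> i)) (A i) = emeasure (density (NM (\<mu> i) (\<sigma> i)) (w i)) (A i)"
        by (simp add: NM_density[OF sig] w_def[abs_def])
      also have "\<dots> = (\<integral>\<^sup>+y. w i y * indicator (A i) y \<partial>NM (\<mu> i) (\<sigma> i))"
        by (rule emeasure_density) (use A i in auto)
      finally show "(\<integral>\<^sup>+y. w i y * indicator (A i) y \<partial>NM (\<mu> i) (\<sigma> i)) = emeasure (NM (\<mu> i + c i) (\<sigma> i)) (A i)" ..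
    qed
    finally show "emeasure (density (PM I \<mu> \<sigma>) ?f) (Pi\<^sub>E I A) = (\<Prod>i\<in>I. emeasure (NM (\<mu> i + c i) (\<sigma> i)) (A i))" .
  qed
qed


lemma NM_moments:
  assumes "\<sigma> > 0"
  shows "integrable (NM \<mu> \<sigma>) (\<lambda>y. y - \<mu>)" "integral\<^sup>L (NM \<mu> \<sigma>) (\<lambda>y. y - \<mu>) = 0"
    "integrable (NM \<mu> \<sigma>) (\<lambda>y. (y - \<mu>)\<^sup>2)" "integral\<^sup>L (NM \<mu> \<sigma>) (\<lambda>y. (y - \<mu>)\<^sup>2) = \<sigma>\<^sup>2"
    "integrable (NM \<mu> \<sigma>) (\<lambda>y. y)" "integral\<^sup>L (NM \<mu> \<sigma>) (\<lambda>y. y) = \<mu>"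
proof -
  have nn: "AE x in lborel. 0 \<le> normal_density \<mu> \<sigma> x" by simp
  have i1: "integrable lborel (\<lambda>x. normal_density \<mu> \<sigma> x * (x - \<mu>) ^ 1)"
    using integrable_normal_moment[OF assms, of \<mu> 1] .
  have i2: "integrable lborel (\<lambda>x. normal_density \<mu> \<sigma> x * (x - \<mu>) ^ 2)"
    using integrable_normal_moment[OF assms, of \<mu> 2] .
  have i0: "integrable lborel (\<lambda>x. normal_density \<mu> \<sigma> x * x)"
    using integrable_normal_moment_nz_1[OF assms] .
  show "integrable (NM \<mu> \<sigma>) (\<lambda>y. y - \<mu>)"
    unfolding dens_measure_def using i1 by (subst integrable_density) auto
  show "integrable (NM \<mu> \<sigma>) (\<lambda>y. (y - \<mu>)\<^sup>2)"
    unfolding dens_measure_def using i2 by (subst integrable_density) auto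
  show "integrable (NM \<mu> \<sigma>) (\<lambda>y. y)"
    unfolding dens_measure_def using i0 by (subst integrable_density) auto
  have "integral\<^sup>L (NM \<mu> \<sigma>) (\<lambda>y. y - \<mu>) = integral\<^sup>L lborel (\<lambda>x. normal_density \<mu> \<sigma> x * (x - \<mu>) ^ (2 * 0 + 1))"
    unfolding dens_measure_def by (subst integral_density) auto
  then show "integral\<^sup>L (NM \<mu> \<sigma>) (\<lambda>y. y - \<mu>) = 0"
    using integral_normal_moment_odd[OF assms, of \<mu> 0] by simp
  have "integral\<^sup>L (NM \<mu> \<sigma>) (\<lambda>y. (y - \<mu>)\<^sup>2) = integral\<^sup>L lborel (\<lambda>x. normal_density \<mu> \<sigma> x * (x - \<mu>) ^ (2 * 1))"
    unfolding dens_measure_def by (subst integral_density) auto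
  then show "integral\<^sup>L (NM \<mu> \<sigma>) (\<lambda>y. (y - \<mu>)\<^sup>2) = \<sigma>\<^sup>2"
    using integral_normal_moment_even[OF assms, of \<mu> 1] by simp
  have "integral\<^sup>L (NM \<mu> \<sigma>) (\<lambda>y. y) = integral\<^sup>L lborel (\<lambda>x. normal_density \<mu> \<sigma> x * x)"
    unfolding dens_measure_def by (subst integral_density) auto
  then show "integral\<^sup>L (NM \<mu> \<sigma>) (\<lambda>y. y) = \<mu>"
    using integral_normal_moment_nz_1[OF assms] by simp
qed

lemma NM_UNIV: "\<sigma> > 0 \<Longrightarrow> measure (NM \<mu> \<sigma>) UNIV = 1"
  using prob_space.prob_space[OF prob_NM[of \<sigma> \<mu>]] by simp

lemma dvar_normal: "\<sigma> > 0 \<Longrightarrow> dvar (normal_density 0 \<sigma>) = \<sigma>\<^sup>2"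
  using NM_moments[of \<sigma> 0] by (simp add: dvar_def mvar_def)

context
  fixes I :: "'i set" and \<mu> \<sigma> :: "'i \<Rightarrow> real"
  assumes I: "finite I" and sig: "\<And>i. \<sigma> i > 0"
begin

interpretation S: product_prob_space "\<lambda>i. NM (\<mu> i) (\<sigma> i)" by (rule PM_prob) (rule sig)

lemma PM_coord:
  fixes g :: "real \<Rightarrow> real"
  assumes i: "i \<in> I" and g: "integrable (NM (\<mu> i) (\<sigma> i)) g"
  shows "integrable (PM I \<mu> \<sigma>) (\<lambda>x. g (x i))" "integral\<^sup>L (PM I \<mu> \<sigma>) (\<lambda>x. g (x i)) = integral\<^sup>L (NM (\<mu> i) (\<sigma> i)) g"
proof -
  define f where "f j = (if j = i then g else (\<lambda>_. 1::real))" for j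
  have fi: "integrable (NM (\<mu> j) (\<sigma> j)) (f j)" for j
    using g S.M.integrable_const by (auto simp: f_def)
  have eq: "(\<Prod>j\<in>I. f j (x j)) = g (x i)" for x
  proof -
    have "(\<Prod>j\<in>I. f j (x j)) = (\<Prod>j\<in>I. if j = i then g (x j) else 1)"
      by (rule prod.cong) (auto simp: f_def)
    then show ?thesis using i I by simp
  qed
  show "integrable (PM I \<mu> \<sigma>) (\<lambda>x. g (x i))"
    using S.product_integrable_prod[OF I fi] by (simp add: eq)
  have "integral\<^sup>L (PM I \<mu> \<sigma>) (\<lambda>x. g (x i)) = (\<Prod>j\<in>I. integral\<^sup>L (NM (\<mu> j) (\<sigma> j)) (f j))"
    using S.product_integral_prod[OF I fi] by (simp add: eq)
  also have "\<dots> = (\<Prod>j\<in>I. if j = i then integral\<^sup>L (NM (\<mu> j) (\<sigma> j)) g else 1)"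
    by (rule prod.cong) (auto simp: f_def NM_UNIV sig)
  also have "\<dots> = integral\<^sup>L (NM (\<mu> i) (\<sigma> i)) g" using i I by simp
  finally show "integral\<^sup>L (PM I \<mu> \<sigma>) (\<lambda>x. g (x i)) = integral\<^sup>L (NM (\<mu> i) (\<sigma> i)) g" .
qed

lemma PM_coord2:
  fixes g h :: "real \<Rightarrow> real"
  assumes i: "i \<in> I" and k: "k \<in> I" and ik: "i \<noteq> k"
    and g: "integrable (NM (\<mu> i) (\<sigma> i)) g" and h: "integrable (NM (\<mu> k) (\<sigma> k)) h"
  shows "integrable (PM I \<mu> \<sigma>) (\<lambda>x. g (x i) * h (x k))"
    "integral\<^sup>L (PM I \<mu> \<sigma>) (\<lambda>x. g (x i) * h (x k)) = integral\<^sup>L (NM (\<mu> i) (\<sigma> i)) g * integral\<^sup>L (NM (\<mu> k) (\<sigma> k)) h"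
proof -
  define f where "f j = (if j = i then g else if j = k then h else (\<lambda>_. 1::real))" for j
  have fi: "integrable (NM (\<mu> j) (\<sigma> j)) (f j)" for j
    using g h S.M.integrable_const by (auto simp: f_def)
  have pe: "(\<Prod>j\<in>I. F j) = F i * F k" if "\<And>j. j \<noteq> i \<Longrightarrow> j \<noteq> k \<Longrightarrow> F j = 1" for F :: "'i \<Rightarrow> real"
  proof -
    have "(\<Prod>j\<in>I. F j) = F i * (\<Prod>j\<in>I - {i}. F j)" using I i by (simp add: prod.remove)
    also have "(\<Prod>j\<in>I - {i}. F j) = F k * (\<Prod>j\<in>I - {i} - {k}. F j)" using I k ik by (subst prod.remove) auto
    also have "(\<Prod>j\<in>I - {i} - {k}. F j) = 1" using that by (intro prod.neutral) auto
    finally show ?thesis by simp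
  qed
  have eq: "(\<Prod>j\<in>I. f j (x j)) = g (x i) * h (x k)" for x
    using ik by (subst pe) (auto simp: f_def)
  show "integrable (PM I \<mu> \<sigma>) (\<lambda>x. g (x i) * h (x k))"
    using S.product_integrable_prod[OF I fi] by (simp add: eq)
  have "integral\<^sup>L (PM I \<mu> \<sigma>) (\<lambda>x. g (x i) * h (x k)) = (\<Prod>j\<in>I. integral\<^sup>L (NM (\<mu> j) (\<sigma> j)) (f j))"
    using S.product_integral_prod[OF I fi] by (simp add: eq)
  also have "\<dots> = integral\<^sup>L (NM (\<mu> i) (\<sigma> i)) g * integral\<^sup>L (NM (\<mu> k) (\<sigma> k)) h"
    using ik by (subst pe) (auto simp: f_def NM_UNIV sig)
  finally show "integral\<^sup>L (PM I \<mu> \<sigma>) (\<lambda>x. g (x i) * h (x k)) = integral\<^sup>L (NM (\<mu> i) (\<sigma> i)) g * integral\<^sup>L (NM (\<mu> k) (\<sigma> k)) h" .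
qed

lemma PM_lin_moments:
  fixes \<alpha> :: "'i \<Rightarrow> real"
  shows "integrable (PM I \<mu> \<sigma>) (\<lambda>x. \<Sum>i\<in>I. \<alpha> i * (x i - \<mu> i))"
    "integral\<^sup>L (PM I \<mu> \<sigma>) (\<lambda>x. \<Sum>i\<in>I. \<alpha> i * (x i - \<mu> i)) = 0"
    "integrable (PM I \<mu> \<sigma>) (\<lambda>x. (\<Sum>i\<in>I. \<alpha> i * (x i - \<mu> i))\<^sup>2)"
    "integral\<^sup>L (PM I \<mu> \<sigma>) (\<lambda>x. (\<Sum>i\<in>I. \<alpha> i * (x i - \<mu> i))\<^sup>2) = (\<Sum>i\<in>I. (\<alpha> i)\<^sup>2 * (\<sigma> i)\<^sup>2)"
proof -
  note m = NM_moments[OF sig]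
  have c1: "integrable (PM I \<mu> \<sigma>) (\<lambda>x. \<alpha> i * (x i - \<mu> i))" "integral\<^sup>L (PM I \<mu> \<sigma>) (\<lambda>x. \<alpha> i * (x i - \<mu> i)) = 0"
    if i: "i \<in> I" for i
    using PM_coord[OF i m(1)] m(2) by auto
  show "integrable (PM I \<mu> \<sigma>) (\<lambda>x. \<Sum>i\<in>I. \<alpha> i * (x i - \<mu> i))" using c1 by auto
  show "integral\<^sup>L (PM I \<mu> \<sigma>) (\<lambda>x. \<Sum>i\<in>I. \<alpha> i * (x i - \<mu> i)) = 0"
  proof -
    have "integral\<^sup>L (PM I \<mu> \<sigma>) (\<lambda>x. \<Sum>i\<in>I. \<alpha> i * (x i - \<mu> i)) = (\<Sum>i\<in>I. integral\<^sup>L (PM I \<mu> \<sigma>) (\<lambda>x. \<alpha> i * (x i - \<mu> i)))"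
      by (rule Bochner_Integration.integral_sum) (rule c1)
    also have "\<dots> = 0" using c1(2) by (intro sum.neutral) (simp del: integral_mult_right_zero)
    finally show ?thesis .
  qed
  define Z where "Z i x = \<alpha> i * (x i - \<mu> i)" for i x
  have sq: "(\<Sum>i\<in>I. \<alpha> i * (x i - \<mu> i))\<^sup>2 = (\<Sum>i\<in>I. \<Sum>k\<in>I. Z i x * Z k x)" for x
    by (simp add: Z_def power2_eq_square sum_product)
  have cz: "integrable (PM I \<mu> \<sigma>) (\<lambda>x. Z i x * Z k x) \<and>
      integral\<^sup>L (PM I \<mu> \<sigma>) (\<lambda>x. Z i x * Z k x) = (if i = k then (\<alpha> i)\<^sup>2 * (\<sigma> i)\<^sup>2 else 0)"
    if "i \<in> I" "k \<in> I" for i k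
  proof (cases "i = k")
    case True
    have "integrable (PM I \<mu> \<sigma>) (\<lambda>x. (\<lambda>y. (\<alpha> i)\<^sup>2 * (y - \<mu> i)\<^sup>2) (x i))"
      "integral\<^sup>L (PM I \<mu> \<sigma>) (\<lambda>x. (\<lambda>y. (\<alpha> i)\<^sup>2 * (y - \<mu> i)\<^sup>2) (x i)) = integral\<^sup>L (NM (\<mu> i) (\<sigma> i)) (\<lambda>y. (\<alpha> i)\<^sup>2 * (y - \<mu> i)\<^sup>2)"
      using PM_coord[OF that(1), of "\<lambda>y. (\<alpha> i)\<^sup>2 * (y - \<mu> i)\<^sup>2"] m(3) by auto
    moreover have "Z i x * Z k x = (\<alpha> i)\<^sup>2 * (x i - \<mu> i)\<^sup>2" for x using True by (simp add: Z_def power2_eq_square)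
    ultimately show ?thesis using True m(4) by simp
  next
    case False
    have "integrable (PM I \<mu> \<sigma>) (\<lambda>x. (\<lambda>y. \<alpha> i * (y - \<mu> i)) (x i) * (\<lambda>y. \<alpha> k * (y - \<mu> k)) (x k))"
      "integral\<^sup>L (PM I \<mu> \<sigma>) (\<lambda>x. (\<lambda>y. \<alpha> i * (y - \<mu> i)) (x i) * (\<lambda>y. \<alpha> k * (y - \<mu> k)) (x k)) =
        integral\<^sup>L (NM (\<mu> i) (\<sigma> i)) (\<lambda>y. \<alpha> i * (y - \<mu> i)) * integral\<^sup>L (NM (\<mu> k) (\<sigma> k)) (\<lambda>y. \<alpha> k * (y - \<mu> k))"
      using PM_coord2[OF that False, of "\<lambda>y. \<alpha> i * (y - \<mu> i)" "\<lambda>y. \<alpha> k * (y - \<mu> k)"] m(1) by auto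
    then show ?thesis using False m(2) by (simp add: Z_def)
  qed
  show "integrable (PM I \<mu> \<sigma>) (\<lambda>x. (\<Sum>i\<in>I. \<alpha> i * (x i - \<mu> i))\<^sup>2)"
    unfolding sq using cz by auto
  have "integral\<^sup>L (PM I \<mu> \<sigma>) (\<lambda>x. (\<Sum>i\<in>I. \<alpha> i * (x i - \<mu> i))\<^sup>2)
      = (\<Sum>i\<in>I. \<Sum>k\<in>I. integral\<^sup>L (PM I \<mu> \<sigma>) (\<lambda>x. Z i x * Z k x))"
    unfolding sq
  proof -
    have "integral\<^sup>L (PM I \<mu> \<sigma>) (\<lambda>x. \<Sum>i\<in>I. \<Sum>k\<in>I. Z i x * Z k x) = (\<Sum>i\<in>I. integral\<^sup>L (PM I \<mu> \<sigma>) (\<lambda>x. \<Sum>k\<in>I. Z i x * Z k x))"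
      by (rule Bochner_Integration.integral_sum) (use cz in auto)
    also have "\<dots> = (\<Sum>i\<in>I. \<Sum>k\<in>I. integral\<^sup>L (PM I \<mu> \<sigma>) (\<lambda>x. Z i x * Z k x))"
      by (intro sum.cong refl Bochner_Integration.integral_sum) (use cz in auto)
    finally show "integral\<^sup>L (PM I \<mu> \<sigma>) (\<lambda>x. \<Sum>i\<in>I. \<Sum>k\<in>I. Z i x * Z k x) = (\<Sum>i\<in>I. \<Sum>k\<in>I. integral\<^sup>L (PM I \<mu> \<sigma>) (\<lambda>x. Z i x * Z k x))" .
  qed
  also have "\<dots> = (\<Sum>i\<in>I. \<Sum>k\<in>I. (if i = k then (\<alpha> i)\<^sup>2 * (\<sigma> i)\<^sup>2 else 0))"
    using cz by (intro sum.cong refl) auto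
  also have "\<dots> = (\<Sum>i\<in>I. (\<alpha> i)\<^sup>2 * (\<sigma> i)\<^sup>2)" using I by simp
  finally show "integral\<^sup>L (PM I \<mu> \<sigma>) (\<lambda>x. (\<Sum>i\<in>I. \<alpha> i * (x i - \<mu> i))\<^sup>2) = (\<Sum>i\<in>I. (\<alpha> i)\<^sup>2 * (\<sigma> i)\<^sup>2)" .
qed

end


lemma distr_pair_snd':
  assumes "prob_space M1" "sigma_finite_measure M2"
  shows "distr (M1 \<Otimes>\<^sub>M M2) M2 snd = M2"
proof (intro measure_eqI)
  interpret P1: prob_space M1 by fact
  interpret S2: sigma_finite_measure M2 by fact
  fix A assume A: "A \<in> sets (distr (M1 \<Otimes>\<^sub>M M2) M2 snd)"
  from A have "emeasure (distr (M1 \<Otimes>\<^sub>M M2) M2 snd) A = emeasure (M1 \<Otimes>\<^sub>M M2) (space M1 \<times> A)"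
    by (auto simp add: emeasure_distr space_pair_measure dest: sets.sets_into_space intro!: arg_cong2[where f=emeasure])
  with A show "emeasure (distr (M1 \<Otimes>\<^sub>M M2) M2 snd) A = emeasure M2 A"
    by (simp add: S2.emeasure_pair_measure_Times P1.emeasure_space_1)
qed simp

lemma abs_prod_le_sq: "\<bar>(a::real) * b\<bar> \<le> a\<^sup>2 + b\<^sup>2"
proof -
  have "0 \<le> (\<bar>a\<bar> - \<bar>b\<bar>)\<^sup>2" by simp
  then have "2 * (\<bar>a\<bar> * \<bar>b\<bar>) \<le> a\<^sup>2 + b\<^sup>2" by (simp add: power2_eq_square algebra_simps)
  moreover have "0 \<le> \<bar>a\<bar> * \<bar>b\<bar>" by simp
  ultimately show ?thesis unfolding abs_mult by linarith
qed

lemma pair_moments: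
  fixes F :: "'a \<Rightarrow> real" and G :: "'b \<Rightarrow> real"
  assumes P1: "prob_space M1" and P2: "prob_space M2"
    and F: "integrable M1 F" "integrable M1 (\<lambda>x. (F x)\<^sup>2)" "integral\<^sup>L M1 F = 0"
    and G: "integrable M2 G" "integrable M2 (\<lambda>x. (G x)\<^sup>2)" "integral\<^sup>L M2 G = 0"
  shows "integrable (M1 \<Otimes>\<^sub>M M2) (\<lambda>\<omega>. F (fst \<omega>) + G (snd \<omega>))"
    "integral\<^sup>L (M1 \<Otimes>\<^sub>M M2) (\<lambda>\<omega>. F (fst \<omega>) + G (snd \<omega>)) = 0"
    "integrable (M1 \<Otimes>\<^sub>M M2) (\<lambda>\<omega>. (F (fst \<omega>) + G (snd \<omega>))\<^sup>2)"
    "integral\<^sup>L (M1 \<Otimes>\<^sub>M M2) (\<lambda>\<omega>. (F (fst \<omega>) + G (snd \<omega>))\<^sup>2) = integral\<^sup>L M1 (\<lambda>x. (F x)\<^sup>2) + integral\<^sup>L M2 (\<lambda>x. (G x)\<^sup>2)"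
proof -
  interpret P1: prob_space M1 by fact
  interpret P2: prob_space M2 by fact
  interpret PP: pair_sigma_finite M1 M2 ..
  have [measurable]: "F \<in> borel_measurable M1" "G \<in> borel_measurable M2" using F G by auto
  have d1: "distr (M1 \<Otimes>\<^sub>M M2) M1 fst = M1" by (rule P2.distr_pair_fst)
  have d2: "distr (M1 \<Otimes>\<^sub>M M2) M2 snd = M2" by (rule distr_pair_snd'[OF P1 prob_space_imp_sigma_finite[OF P2]])
  have lift1: "integrable (M1 \<Otimes>\<^sub>M M2) (\<lambda>\<omega>. f (fst \<omega>))" "integral\<^sup>L (M1 \<Otimes>\<^sub>M M2) (\<lambda>\<omega>. f (fst \<omega>)) = integral\<^sup>L M1 f"
    if "integrable M1 f" for f :: "'a \<Rightarrow> real"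
  proof -
    have [measurable]: "f \<in> borel_measurable M1" using that by auto
    show "integrable (M1 \<Otimes>\<^sub>M M2) (\<lambda>\<omega>. f (fst \<omega>))"
      using that integrable_distr_eq[of fst "M1 \<Otimes>\<^sub>M M2" M1 f] d1 by simp
    show "integral\<^sup>L (M1 \<Otimes>\<^sub>M M2) (\<lambda>\<omega>. f (fst \<omega>)) = integral\<^sup>L M1 f"
      using integral_distr[of fst "M1 \<Otimes>\<^sub>M M2" M1 f] d1 by simp
  qed
  have lift2: "integrable (M1 \<Otimes>\<^sub>M M2) (\<lambda>\<omega>. g (snd \<omega>))" "integral\<^sup>L (M1 \<Otimes>\<^sub>M M2) (\<lambda>\<omega>. g (snd \<omega>)) = integral\<^sup>L M2 g"
    if "integrable M2 g" for g :: "'b \<Rightarrow> real"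
  proof -
    have [measurable]: "g \<in> borel_measurable M2" using that by auto
    show "integrable (M1 \<Otimes>\<^sub>M M2) (\<lambda>\<omega>. g (snd \<omega>))"
      using that integrable_distr_eq[of snd "M1 \<Otimes>\<^sub>M M2" M2 g] d2 by simp
    show "integral\<^sup>L (M1 \<Otimes>\<^sub>M M2) (\<lambda>\<omega>. g (snd \<omega>)) = integral\<^sup>L M2 g"
      using integral_distr[of snd "M1 \<Otimes>\<^sub>M M2" M2 g] d2 by simp
  qed
  note a1 = lift1[OF F(1)] and a2 = lift1[OF F(2)] and b1 = lift2[OF G(1)] and b2 = lift2[OF G(2)]
  show "integrable (M1 \<Otimes>\<^sub>M M2) (\<lambda>\<omega>. F (fst \<omega>) + G (snd \<omega>))" using a1 b1 by auto
  show "integral\<^sup>L (M1 \<Otimes>\<^sub>M M2) (\<lambda>\<omega>. F (fst \<omega>) + G (snd \<omega>)) = 0"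
    using a1 b1 F(3) G(3) by simp
  have cr: "integrable (M1 \<Otimes>\<^sub>M M2) (\<lambda>\<omega>. F (fst \<omega>) * G (snd \<omega>))"
  proof (rule Bochner_Integration.integrable_bound)
    show "integrable (M1 \<Otimes>\<^sub>M M2) (\<lambda>\<omega>. (F (fst \<omega>))\<^sup>2 + (G (snd \<omega>))\<^sup>2)" using a2 b2 by auto
    show "(\<lambda>\<omega>. F (fst \<omega>) * G (snd \<omega>)) \<in> borel_measurable (M1 \<Otimes>\<^sub>M M2)" by measurable
    show "AE \<omega> in M1 \<Otimes>\<^sub>M M2. norm (F (fst \<omega>) * G (snd \<omega>)) \<le> norm ((F (fst \<omega>))\<^sup>2 + (G (snd \<omega>))\<^sup>2)"
    proof (rule AE_I2)
      fix \<omega>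
      have "\<bar>F (fst \<omega>) * G (snd \<omega>)\<bar> \<le> (F (fst \<omega>))\<^sup>2 + (G (snd \<omega>))\<^sup>2"
        by (rule abs_prod_le_sq)
      then show "norm (F (fst \<omega>) * G (snd \<omega>)) \<le> norm ((F (fst \<omega>))\<^sup>2 + (G (snd \<omega>))\<^sup>2)" by simp
    qed
  qed
  have cr0: "integral\<^sup>L (M1 \<Otimes>\<^sub>M M2) (\<lambda>\<omega>. F (fst \<omega>) * G (snd \<omega>)) = 0"
  proof -
    have ci: "integrable (M1 \<Otimes>\<^sub>M M2) (case_prod (\<lambda>x y. F x * G y))" using cr by (simp add: case_prod_unfold)
    have "integral\<^sup>L (M1 \<Otimes>\<^sub>M M2) (case_prod (\<lambda>x y. F x * G y)) = (\<integral>x. (\<integral>y. F x * G y \<partial>M2) \<partial>M1)"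
      using PP.integral_fst[OF ci] by simp
    also have "\<dots> = 0" using G(3) by simp
    finally show ?thesis by (simp add: case_prod_unfold)
  qed
  have sq: "(F (fst \<omega>) + G (snd \<omega>))\<^sup>2 = (F (fst \<omega>))\<^sup>2 + (G (snd \<omega>))\<^sup>2 + 2 * (F (fst \<omega>) * G (snd \<omega>))" for \<omega>
    by (simp add: power2_eq_square algebra_simps)
  show "integrable (M1 \<Otimes>\<^sub>M M2) (\<lambda>\<omega>. (F (fst \<omega>) + G (snd \<omega>))\<^sup>2)"
    unfolding sq using a2 b2 cr by auto
  show "integral\<^sup>L (M1 \<Otimes>\<^sub>M M2) (\<lambda>\<omega>. (F (fst \<omega>) + G (snd \<omega>))\<^sup>2) = integral\<^sup>L M1 (\<lambda>x. (F x)\<^sup>2) + integral\<^sup>L M2 (\<lambda>x. (G x)\<^sup>2)"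
    unfolding sq using a2 b2 cr cr0 by simp
qed


lemma bind_integral:
  fixes f :: "real \<Rightarrow> real"
  assumes M: "prob_space M" and K[measurable]: "K \<in> M \<rightarrow>\<^sub>M prob_algebra borel"
    and f[measurable]: "f \<in> borel_measurable borel"
    and int: "integrable (M \<bind> K) f"
  shows "AE x in M. integrable (K x) f"
    "integrable M (\<lambda>x. integral\<^sup>L (K x) f)"
    "integral\<^sup>L (M \<bind> K) f = (\<integral>x. integral\<^sup>L (K x) f \<partial>M)"
proof -
  interpret M: prob_space M by fact
  have Ks[measurable]: "K \<in> M \<rightarrow>\<^sub>M subprob_algebra borel" by (rule measurable_prob_algebraD[OF K])
  have sK: "x \<in> space M \<Longrightarrow> sets (K x) = sets borel" for x
    using measurable_space[OF K] by (auto simp: space_prob_algebra)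
  have fK[measurable]: "x \<in> space M \<Longrightarrow> f \<in> borel_measurable (K x)" for x
    using measurable_cong_sets[OF sK[symmetric] refl] f by auto
  define Pp where "Pp x = (\<integral>\<^sup>+y. ennreal (f y) \<partial>K x)" for x
  define Pn where "Pn x = (\<integral>\<^sup>+y. ennreal (- f y) \<partial>K x)" for x
  have [measurable]: "Pp \<in> borel_measurable M" "Pn \<in> borel_measurable M"
    unfolding Pp_def Pn_def by (rule measurable_compose[OF Ks nn_integral_measurable_subprob_algebra], measurable)+
  have sJ: "sets (M \<bind> K) = sets borel" by (rule sets_bind[OF sets_kernel[OF Ks]]) (use M.not_empty in auto)
  have fJ[measurable]: "f \<in> borel_measurable (M \<bind> K)" by (subst measurable_cong_sets[OF sJ refl]) (rule f)
  have bp: "(\<integral>\<^sup>+y. ennreal (f y) \<partial>(M \<bind> K)) = (\<integral>\<^sup>+x. Pp x \<partial>M)"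
    unfolding Pp_def by (rule nn_integral_bind[OF _ Ks]) measurable
  have bn: "(\<integral>\<^sup>+y. ennreal (- f y) \<partial>(M \<bind> K)) = (\<integral>\<^sup>+x. Pn x \<partial>M)"
    unfolding Pn_def by (rule nn_integral_bind[OF _ Ks]) measurable
  have fin: "(\<integral>\<^sup>+y. ennreal (f y) \<partial>(M \<bind> K)) \<noteq> \<infinity>" "(\<integral>\<^sup>+y. ennreal (- f y) \<partial>(M \<bind> K)) \<noteq> \<infinity>"
    using int unfolding real_integrable_def by auto
  have aep: "AE x in M. Pp x \<noteq> \<infinity>" using fin(1) unfolding bp by (intro nn_integral_PInf_AE) auto
  have aen: "AE x in M. Pn x \<noteq> \<infinity>" using fin(2) unfolding bn by (intro nn_integral_PInf_AE) auto
  show ae: "AE x in M. integrable (K x) f"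
    using aep aen AE_space by eventually_elim (auto simp: real_integrable_def Pp_def Pn_def fK)
  have geq: "AE x in M. integral\<^sup>L (K x) f = enn2real (Pp x) - enn2real (Pn x)"
    using ae by eventually_elim (simp add: real_lebesgue_integral_def Pp_def Pn_def)
  have ip: "integrable M (\<lambda>x. enn2real (Pp x))"
  proof (rule integrableI_nonneg)
    show "(\<lambda>x. enn2real (Pp x)) \<in> borel_measurable M" by measurable
    show "AE x in M. 0 \<le> enn2real (Pp x)" by simp
    have "(\<integral>\<^sup>+x. ennreal (enn2real (Pp x)) \<partial>M) = (\<integral>\<^sup>+x. Pp x \<partial>M)"
      using aep by (intro nn_integral_cong_AE) (auto simp: less_top)
    then show "(\<integral>\<^sup>+x. ennreal (enn2real (Pp x)) \<partial>M) < \<infinity>" using fin(1) bp by (simp add: less_top)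
  qed
  have inn: "integrable M (\<lambda>x. enn2real (Pn x))"
  proof (rule integrableI_nonneg)
    show "(\<lambda>x. enn2real (Pn x)) \<in> borel_measurable M" by measurable
    show "AE x in M. 0 \<le> enn2real (Pn x)" by simp
    have "(\<integral>\<^sup>+x. ennreal (enn2real (Pn x)) \<partial>M) = (\<integral>\<^sup>+x. Pn x \<partial>M)"
      using aen by (intro nn_integral_cong_AE) (auto simp: less_top)
    then show "(\<integral>\<^sup>+x. ennreal (enn2real (Pn x)) \<partial>M) < \<infinity>" using fin(2) bn by (simp add: less_top)
  qed
  have gm[measurable]: "(\<lambda>x. integral\<^sup>L (K x) f) \<in> borel_measurable M"
    by (rule measurable_compose[OF Ks integral_measurable_subprob_algebra]) measurable
  show "integrable M (\<lambda>x. integral\<^sup>L (K x) f)"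
    by (rule integrable_cong_AE_imp[OF Bochner_Integration.integrable_diff[OF ip inn] gm]) (use geq in auto)
  have "(\<integral>x. integral\<^sup>L (K x) f \<partial>M) = (\<integral>x. enn2real (Pp x) - enn2real (Pn x) \<partial>M)"
    by (rule integral_cong_AE) (use geq in auto)
  also have "\<dots> = (\<integral>x. enn2real (Pp x) \<partial>M) - (\<integral>x. enn2real (Pn x) \<partial>M)"
    using ip inn by simp
  also have "(\<integral>x. enn2real (Pp x) \<partial>M) = enn2real (\<integral>\<^sup>+x. Pp x \<partial>M)"
    by (rule enn2real_nn_integral_eq_integral[symmetric]) (use aep in \<open>auto simp: less_top\<close>)
  also have "(\<integral>x. enn2real (Pn x) \<partial>M) = enn2real (\<integral>\<^sup>+x. Pn x \<partial>M)"
    by (rule enn2real_nn_integral_eq_integral[symmetric]) (use aen in \<open>auto simp: less_top\<close>)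
  finally show "integral\<^sup>L (M \<bind> K) f = (\<integral>x. integral\<^sup>L (K x) f \<partial>M)"
    using real_lebesgue_integral_def[OF int] bp bn by simp
qed


lemma sq_integrable_imp_integrable:
  fixes Y :: "'a \<Rightarrow> real"
  assumes "prob_space M" "integrable M (\<lambda>x. (Y x)\<^sup>2)" "Y \<in> borel_measurable M"
  shows "integrable M Y"
proof (rule Bochner_Integration.integrable_bound)
  interpret prob_space M by fact
  show "integrable M (\<lambda>x. 1 + (Y x)\<^sup>2)" using assms by auto
  show "Y \<in> borel_measurable M" by fact
  show "AE x in M. norm (Y x) \<le> norm (1 + (Y x)\<^sup>2)"
  proof (rule AE_I2)
    fix x
    have "\<bar>Y x\<bar> \<le> 1 + (Y x)\<^sup>2"
    proof (cases "\<bar>Y x\<bar> \<le> 1")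
      case True then show ?thesis by (simp add: add_increasing2)
    next
      case False
      then have "\<bar>Y x\<bar> * 1 \<le> \<bar>Y x\<bar> * \<bar>Y x\<bar>" by (intro mult_left_mono) auto
      then have "\<bar>Y x\<bar> \<le> \<bar>Y x\<bar> * \<bar>Y x\<bar>" by (simp only: mult_1_right)
      moreover have "\<bar>Y x\<bar> * \<bar>Y x\<bar> = (Y x)\<^sup>2" by (simp add: power2_eq_square flip: abs_mult)
      ultimately show ?thesis by linarith
    qed
    then show "norm (Y x) \<le> norm (1 + (Y x)\<^sup>2)" by simp
  qed
qed

lemma jensen_sq:
  fixes Y :: "'a \<Rightarrow> real"
  assumes P: "prob_space M" and i2: "integrable M (\<lambda>x. (Y x)\<^sup>2)" and m: "Y \<in> borel_measurable M"
  shows "(integral\<^sup>L M Y)\<^sup>2 \<le> integral\<^sup>L M (\<lambda>x. (Y x)\<^sup>2)"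
proof -
  interpret prob_space M by fact
  have i1: "integrable M Y" by (rule sq_integrable_imp_integrable[OF P i2 m])
  define m where "m = integral\<^sup>L M Y"
  have "0 \<le> integral\<^sup>L M (\<lambda>x. (Y x - m)\<^sup>2)" by simp
  also have "(\<lambda>x. (Y x - m)\<^sup>2) = (\<lambda>x. (Y x)\<^sup>2 - 2 * m * Y x + m\<^sup>2)"
    by (simp add: fun_eq_iff power2_eq_square algebra_simps)
  also have "integral\<^sup>L M \<dots> = integral\<^sup>L M (\<lambda>x. (Y x)\<^sup>2) - 2 * m * m + m\<^sup>2"
    using i1 i2 by (simp add: m_def prob_space)
  finally show ?thesis by (simp add: m_def power2_eq_square)
qed

lemma cauchy_schwarz_int:
  fixes F G :: "'a \<Rightarrow> real"
  assumes iF: "integrable M (\<lambda>x. (F x)\<^sup>2)" and iG: "integrable M (\<lambda>x. (G x)\<^sup>2)"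
    and iFG: "integrable M (\<lambda>x. F x * G x)" and pos: "integral\<^sup>L M (\<lambda>x. (G x)\<^sup>2) > 0"
  shows "(integral\<^sup>L M (\<lambda>x. F x * G x))\<^sup>2 \<le> integral\<^sup>L M (\<lambda>x. (F x)\<^sup>2) * integral\<^sup>L M (\<lambda>x. (G x)\<^sup>2)"
proof -
  define A where "A = integral\<^sup>L M (\<lambda>x. (F x)\<^sup>2)"
  define B where "B = integral\<^sup>L M (\<lambda>x. (G x)\<^sup>2)"
  define C where "C = integral\<^sup>L M (\<lambda>x. F x * G x)"
  define l where "l = C / B"
  have "0 \<le> integral\<^sup>L M (\<lambda>x. (F x - l * G x)\<^sup>2)" by simp
  also have "(\<lambda>x. (F x - l * G x)\<^sup>2) = (\<lambda>x. (F x)\<^sup>2 - (2 * l) * (F x * G x) + l\<^sup>2 * (G x)\<^sup>2)"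
    by (simp add: fun_eq_iff power2_eq_square algebra_simps)
  also have "integral\<^sup>L M \<dots> = A - 2 * l * C + l\<^sup>2 * B"
    using iF iG iFG by (simp add: A_def B_def C_def)
  also have "\<dots> = A - C\<^sup>2 / B"
    using pos by (simp add: l_def B_def[symmetric] power2_eq_square field_simps)
  finally have "C\<^sup>2 / B \<le> A" by simp
  then show ?thesis using pos by (simp add: A_def[symmetric] B_def[symmetric] C_def[symmetric] field_simps)
qed

lemma hcr:
  fixes Y W :: "'a \<Rightarrow> real"
  assumes P: "prob_space B"
    and iY: "integrable B Y" and iY2: "integrable B (\<lambda>x. (Y x)\<^sup>2)"
    and iW: "integrable B W" and iW2: "integrable B (\<lambda>x. (W x)\<^sup>2)" and iWY: "integrable B (\<lambda>x. W x * Y x)"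
    and eY: "integral\<^sup>L B Y = \<tau>" and eW: "integral\<^sup>L B W = 1" and eW2: "integral\<^sup>L B (\<lambda>x. (W x)\<^sup>2) = E2"
    and E2: "E2 > 1" and eWY: "integral\<^sup>L B (\<lambda>x. W x * Y x) = \<tau> + s"
  shows "s\<^sup>2 \<le> integral\<^sup>L B (\<lambda>x. (Y x - \<tau>)\<^sup>2) * (E2 - 1)"
proof -
  interpret prob_space B by fact
  have eq1: "(\<lambda>x. (Y x - \<tau>) * (W x - 1)) = (\<lambda>x. W x * Y x - \<tau> * W x - Y x + \<tau>)"
    by (simp add: fun_eq_iff algebra_simps)
  have c: "integral\<^sup>L B (\<lambda>x. (Y x - \<tau>) * (W x - 1)) = s"
    unfolding eq1 using iY iW iWY eY eW eWY by (simp add: prob_space)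
  have eq2: "(\<lambda>x. (W x - 1)\<^sup>2) = (\<lambda>x. (W x)\<^sup>2 - 2 * W x + 1)"
    by (simp add: fun_eq_iff power2_eq_square algebra_simps)
  have g: "integral\<^sup>L B (\<lambda>x. (W x - 1)\<^sup>2) = E2 - 1"
    unfolding eq2 using iW iW2 eW eW2 by (simp add: prob_space)
  have eq3: "(\<lambda>x. (Y x - \<tau>)\<^sup>2) = (\<lambda>x. (Y x)\<^sup>2 - 2 * \<tau> * Y x + \<tau>\<^sup>2)"
    by (simp add: fun_eq_iff power2_eq_square algebra_simps)
  have "integrable B (\<lambda>x. (Y x - \<tau>)\<^sup>2)" unfolding eq3 using iY iY2 by auto
  moreover have "integrable B (\<lambda>x. (W x - 1)\<^sup>2)" unfolding eq2 using iW iW2 by auto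
  moreover have "integrable B (\<lambda>x. (Y x - \<tau>) * (W x - 1))" unfolding eq1 using iY iW iWY by auto
  ultimately have "(integral\<^sup>L B (\<lambda>x. (Y x - \<tau>) * (W x - 1)))\<^sup>2 \<le>
      integral\<^sup>L B (\<lambda>x. (Y x - \<tau>)\<^sup>2) * integral\<^sup>L B (\<lambda>x. (W x - 1)\<^sup>2)"
    using E2 g by (intro cauchy_schwarz_int) auto
  then show ?thesis using c g by simp
qed

lemma exp_bound_limit:
  fixes c m :: real
  assumes c: "c > 0" and H: "\<And>s. s > 0 \<Longrightarrow> s\<^sup>2 / (exp (s\<^sup>2 * c) - 1) \<le> m"
  shows "1 / c \<le> m"
proof -
  have key: "exp (- x) \<le> m * c" if x: "x > 0" for x
  proof -
    define s where "s = sqrt (x / c)"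
    have s: "s > 0" "s\<^sup>2 * c = x" using x c by (auto simp: s_def)
    have e1: "exp x - 1 \<le> x * exp x"
    proof -
      have "1 - x \<le> exp (- x)" using exp_ge_add_one_self[of "- x"] by simp
      then have "(1 - x) * exp x \<le> exp (- x) * exp x" by (intro mult_right_mono) auto
      then show ?thesis by (simp add: exp_minus field_simps)
    qed
    have e0: "exp x - 1 > 0" using x by simp
    have "s\<^sup>2 / (x * exp x) \<le> s\<^sup>2 / (exp x - 1)"
      using e0 e1 s by (intro divide_left_mono) auto
    also have "\<dots> \<le> m" using H[OF s(1)] s(2) by simp
    finally have "s\<^sup>2 / (x * exp x) \<le> m" .
    moreover have "s\<^sup>2 / (x * exp x) = exp (- x) / c"
      using s x c by (simp add: exp_minus field_simps)
    ultimately have "exp (- x) / c \<le> m" by simp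
    then show ?thesis using c by (simp add: field_simps)
  qed
  show ?thesis
  proof (rule ccontr)
    assume "\<not> 1 / c \<le> m"
    then have mc: "m * c < 1" using c by (simp add: field_simps)
    show False
    proof (cases "m * c \<le> 0")
      case True
      then show False using key[of 1] exp_gt_zero[of "-1"] by linarith
    next
      case False
      define x where "x = - ln (m * c) / 2"
      have x: "x > 0" using False mc by (simp add: x_def)
      have "exp (- x) = sqrt (m * c)"
      proof -
        have "ln (sqrt (m * c)) = ln (m * c) / 2" using False by (simp add: ln_sqrt)
        then have "exp (- x) = exp (ln (sqrt (m * c)))" by (simp add: x_def)
        then show ?thesis using False by simp
      qed
      moreover have "sqrt (m * c) > m * c"
      proof -
        have q: "0 < sqrt (m * c)" "sqrt (m * c) < 1" using False mc by auto
        have "sqrt (m * c) * sqrt (m * c) < sqrt (m * c) * 1"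
          using q by (intro mult_strict_left_mono) auto
        moreover have "sqrt (m * c) * sqrt (m * c) = m * c" using False by simp
        ultimately show ?thesis by simp
      qed
      ultimately show False using key[OF x] by simp
    qed
  qed
qed


locale gs3 = gs P \<sigma> \<sigma>N for P :: "nat \<Rightarrow> 's::finite \<Rightarrow> 's option" and \<sigma> \<sigma>N +
  fixes \<Phi> :: "'s \<Rightarrow> real \<Rightarrow> real" and N :: "real \<Rightarrow> real"
  assumes Phi: "\<And>c. \<Phi> c = normal_density 0 (\<sigma> c)" and Nd: "N = normal_density 0 \<sigma>N"
begin

sublocale gs2 P \<sigma> \<sigma>N \<Phi> N
  by unfold_locales (simp_all add: Phi Nd dvar_normal sig sigN)

abbreviation BX :: "real \<Rightarrow> ('s \<Rightarrow> real) measure" where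
  "BX \<tau> \<equiv> PM UNIV (\<lambda>_. \<tau>) \<sigma>"

abbreviation BN :: "nat \<Rightarrow> ('s \<times> nat \<Rightarrow> real) measure" where
  "BN t \<equiv> PM (UNIV \<times> {..<t}) (\<lambda>_. 0) (\<lambda>_. \<sigma>N)"

lemma base_eq: "base \<Phi> N \<tau> t = BX \<tau> \<Otimes>\<^sub>M BN t"
proof -
  have "(\<lambda>x. \<Phi> c (x - \<tau>)) = normal_density \<tau> (\<sigma> c)" for c
    by (simp add: Phi normal_density_def fun_eq_iff)
  then show ?thesis by (simp add: base_def Nd)
qed

lemma BX_prob: "prob_space (BX \<tau>)"
  using PM_prob[of \<sigma> "\<lambda>_. \<tau>"] sig by (simp add: prob_space_PiM prob_NM)


lemma BN_prob: "prob_space (BN t)"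
  using sigN by (intro prob_space_PiM prob_NM) auto

definition shift :: "nat \<Rightarrow> ('s \<Rightarrow> real) \<Rightarrow> ('s \<times> nat \<Rightarrow> real) \<Rightarrow> 's omega \<Rightarrow> 's omega" where
  "shift t cx cn \<omega> = ((\<lambda>c\<in>UNIV. fst \<omega> c + cx c), (\<lambda>e\<in>UNIV \<times> {..<t}. snd \<omega> e + cn e))"

lemma shift_measurable[measurable]: "shift t cx cn \<in> base \<Phi> N \<tau> t \<rightarrow>\<^sub>M base \<Phi> N \<tau>' t"
proof -
  have "(\<lambda>\<omega>. ((\<lambda>c\<in>UNIV. fst \<omega> c + cx c), (\<lambda>e\<in>UNIV \<times> {..<t}. snd \<omega> e + cn e))) \<in> BX \<tau> \<Otimes>\<^sub>M BN t \<rightarrow>\<^sub>M BX \<tau>' \<Otimes>\<^sub>M BN t"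
    by (intro measurable_Pair measurable_compose[OF measurable_fst shift_meas] measurable_compose[OF measurable_snd shift_meas])
  then show ?thesis unfolding base_eq shift_def by simp
qed

lemma base_shift:
  "distr (base \<Phi> N \<tau> t) (base \<Phi> N \<tau> t) (shift t cx cn) =
     PM UNIV (\<lambda>c. \<tau> + cx c) \<sigma> \<Otimes>\<^sub>M PM (UNIV \<times> {..<t}) (\<lambda>e. 0 + cn e) (\<lambda>_. \<sigma>N)"
proof -
  have sf: "sigma_finite_measure (distr (BN t) (BN t) (\<lambda>y. \<lambda>e\<in>UNIV \<times> {..<t}. y e + cn e))"
    by (intro prob_space_imp_sigma_finite prob_space.prob_space_distr BN_prob) auto
  have "distr (BX \<tau>) (BX \<tau>) (\<lambda>x. \<lambda>c\<in>UNIV. x c + cx c) \<Otimes>\<^sub>M distr (BN t) (BN t) (\<lambda>y. \<lambda>e\<in>UNIV \<times> {..<t}. y e + cn e)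
     = distr (BX \<tau> \<Otimes>\<^sub>M BN t) (BX \<tau> \<Otimes>\<^sub>M BN t) (\<lambda>(x, y). ((\<lambda>c\<in>UNIV. x c + cx c), (\<lambda>e\<in>UNIV \<times> {..<t}. y e + cn e)))"
    by (rule pair_measure_distr[OF _ _ sf]) (rule shift_meas)+
  moreover have "distr (BX \<tau>) (BX \<tau>) (\<lambda>x. \<lambda>c\<in>UNIV. x c + cx c) = PM UNIV (\<lambda>c. \<tau> + cx c) \<sigma>"
    by (rule PM_shift) (auto simp: sig)
  moreover have "distr (BN t) (BN t) (\<lambda>y. \<lambda>e\<in>UNIV \<times> {..<t}. y e + cn e) = PM (UNIV \<times> {..<t}) (\<lambda>e. 0 + cn e) (\<lambda>_. \<sigma>N)"
    by (rule PM_shift) (auto simp: sigN)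
  ultimately show ?thesis unfolding base_eq shift_def by (simp add: case_prod_unfold)
qed


definition WW :: "real \<Rightarrow> nat \<Rightarrow> 's \<Rightarrow> real \<Rightarrow> 's omega \<Rightarrow> real" where
  "WW \<tau> t a s \<omega> = exp (s * Sc \<tau> t a \<omega> - s\<^sup>2 * II t a / 2)"

lemma Sc_measurable[measurable]: "Sc \<tau> t a \<in> borel_measurable (base \<Phi> N \<tau>' t)"
proof -
  have [measurable]: "(\<lambda>\<omega>. fst \<omega> c) \<in> borel_measurable (base \<Phi> N \<tau>' t)" for c
    unfolding base_eq by (intro measurable_compose[OF measurable_fst] measurable_component_singleton) auto
  have [measurable]: "(\<lambda>\<omega>. snd \<omega> e) \<in> borel_measurable (base \<Phi> N \<tau>' t)" if "e \<in> UNIV \<times> {..<t}" for e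
    unfolding base_eq using that by (intro measurable_compose[OF measurable_snd] measurable_component_singleton) auto
  show ?thesis unfolding Sc_def by measurable
qed

lemma WW_measurable[measurable]: "WW \<tau> t a s \<in> borel_measurable (base \<Phi> N \<tau>' t)"
  unfolding WW_def by measurable

lemma base_density:
  "distr (base \<Phi> N \<tau> t) (base \<Phi> N \<tau> t) (shift t (\<lambda>c. s * vv t a c) (\<lambda>e. s * ww t a e)) =
     density (base \<Phi> N \<tau> t) (\<lambda>\<omega>. ennreal (WW \<tau> t a s \<omega>))"
proof -
  define f1 where "f1 x = (\<Prod>c\<in>UNIV. ennreal (exp (s * vv t a c * (x c - \<tau>) / (\<sigma> c)\<^sup>2 - (s * vv t a c)\<^sup>2 / (2 * (\<sigma> c)\<^sup>2))))" for x
  define f2 where "f2 y = (\<Prod>e\<in>UNIV \<times> {..<t}. ennreal (exp (s * ww t a e * (y e - 0) / \<sigma>N\<^sup>2 - (s * ww t a e)\<^sup>2 / (2 * \<sigma>N\<^sup>2))))" for y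
  have [measurable]: "f1 \<in> borel_measurable (BX \<tau>)"
    unfolding f1_def by (intro borel_measurable_prod_ennreal) (auto intro!: measurable_component_singleton)
  have [measurable]: "f2 \<in> borel_measurable (BN t)"
    unfolding f2_def by (intro borel_measurable_prod_ennreal) (auto intro!: measurable_component_singleton)
  have d1: "PM UNIV (\<lambda>c. \<tau> + s * vv t a c) \<sigma> = density (BX \<tau>) f1"
    unfolding f1_def by (rule PM_density[of UNIV \<sigma> "\<lambda>_. \<tau>" "\<lambda>c. s * vv t a c", simplified]) (auto simp: sig)
  have d2: "PM (UNIV \<times> {..<t}) (\<lambda>e. 0 + s * ww t a e) (\<lambda>_. \<sigma>N) = density (BN t) f2"
    unfolding f2_def by (rule PM_density[of "UNIV \<times> {..<t}" "\<lambda>_. \<sigma>N" "\<lambda>_. 0" "\<lambda>e. s * ww t a e"]) (auto simp: sigN)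
  have sf2: "sigma_finite_measure (density (BN t) f2)"
    unfolding d2[symmetric] by (intro prob_space_imp_sigma_finite prob_space_PiM prob_NM) (auto simp: sigN)
  have sfN: "sigma_finite_measure (BN t)" by (intro prob_space_imp_sigma_finite BN_prob)
  have "distr (base \<Phi> N \<tau> t) (base \<Phi> N \<tau> t) (shift t (\<lambda>c. s * vv t a c) (\<lambda>e. s * ww t a e))
      = density (BX \<tau>) f1 \<Otimes>\<^sub>M density (BN t) f2"
    unfolding base_shift d1[symmetric] d2[symmetric] ..
  also have "\<dots> = density (BX \<tau> \<Otimes>\<^sub>M BN t) (\<lambda>(x, y). f1 x * f2 y)"
    by (rule pair_measure_density[OF _ _ sfN sf2]) auto
  also have "\<dots> = density (base \<Phi> N \<tau> t) (\<lambda>\<omega>. ennreal (WW \<tau> t a s \<omega>))"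
    unfolding base_eq
  proof (rule density_cong)
    show "(\<lambda>(x, y). f1 x * f2 y) \<in> borel_measurable (BX \<tau> \<Otimes>\<^sub>M BN t)" by measurable
    show "(\<lambda>\<omega>. ennreal (WW \<tau> t a s \<omega>)) \<in> borel_measurable (BX \<tau> \<Otimes>\<^sub>M BN t)"
      using WW_measurable[of \<tau> t a s \<tau>] by (simp add: base_eq)
    show "AE \<omega> in BX \<tau> \<Otimes>\<^sub>M BN t. (case \<omega> of (x, y) \<Rightarrow> f1 x * f2 y) = ennreal (WW \<tau> t a s \<omega>)"
    proof (rule AE_I2)
      fix \<omega> :: "'s omega"
      obtain x y where \<omega>: "\<omega> = (x, y)" by fastforce
      define A where "A c = s * (vv t a c * (x c - \<tau>) / (\<sigma> c)\<^sup>2) - s\<^sup>2 / 2 * ((vv t a c)\<^sup>2 / (\<sigma> c)\<^sup>2)" for c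
      define B where "B e = s * (ww t a e * y e / \<sigma>N\<^sup>2) - s\<^sup>2 / 2 * ((ww t a e)\<^sup>2 / \<sigma>N\<^sup>2)" for e
      have "f1 x = ennreal (exp (\<Sum>c\<in>UNIV. A c))"
      proof -
        have "s * vv t a c * (x c - \<tau>) / (\<sigma> c)\<^sup>2 - (s * vv t a c)\<^sup>2 / (2 * (\<sigma> c)\<^sup>2) = A c" for c
          using sig[of c] by (simp add: A_def field_simps power2_eq_square)
        then show ?thesis by (simp add: f1_def prod_ennreal exp_sum)
      qed
      moreover have "f2 y = ennreal (exp (\<Sum>e\<in>UNIV \<times> {..<t}. B e))"
      proof -
        have "s * ww t a e * (y e - 0) / \<sigma>N\<^sup>2 - (s * ww t a e)\<^sup>2 / (2 * \<sigma>N\<^sup>2) = B e" for e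
          using sigN by (simp add: B_def field_simps power2_eq_square)
        then show ?thesis by (simp add: f2_def prod_ennreal exp_sum)
      qed
      moreover have "(\<Sum>c\<in>UNIV. A c) + (\<Sum>e\<in>UNIV \<times> {..<t}. B e) = s * Sc \<tau> t a \<omega> - s\<^sup>2 * II t a / 2"
      proof -
        have sA: "(\<Sum>c\<in>UNIV. A c) = s * (\<Sum>c\<in>UNIV. vv t a c * (x c - \<tau>) / (\<sigma> c)\<^sup>2) - s\<^sup>2 / 2 * (\<Sum>c\<in>UNIV. (vv t a c)\<^sup>2 / (\<sigma> c)\<^sup>2)"
          unfolding A_def by (simp only: sum_subtractf sum_distrib_left)
        have sB: "(\<Sum>e\<in>UNIV \<times> {..<t}. B e) = s * (\<Sum>e\<in>UNIV \<times> {..<t}. ww t a e * y e / \<sigma>N\<^sup>2) - s\<^sup>2 / 2 * (\<Sum>e\<in>UNIV \<times> {..<t}. (ww t a e)\<^sup>2 / \<sigma>N\<^sup>2)"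
          unfolding B_def by (simp only: sum_subtractf sum_distrib_left)
        have alg: "\<And>P Q R S::real. s * P - s\<^sup>2 / 2 * R + (s * Q - s\<^sup>2 / 2 * S) = s * (P + Q) - s\<^sup>2 * (R + S) / 2"
          by (simp add: algebra_simps)
        show ?thesis unfolding sA sB alg Sc_def II_def \<omega> fst_conv snd_conv ..
      qed
      ultimately show "(case \<omega> of (x, y) \<Rightarrow> f1 x * f2 y) = ennreal (WW \<tau> t a s \<omega>)"
        by (simp add: \<omega> WW_def ennreal_mult[symmetric] exp_add[symmetric])
    qed
  qed
  finally show ?thesis .
qed


lemma Sc_split: "Sc \<tau> t a \<omega> = (\<Sum>c\<in>UNIV. (vv t a c / (\<sigma> c)\<^sup>2) * (fst \<omega> c - \<tau>))
   + (\<Sum>e\<in>UNIV \<times> {..<t}. (ww t a e / \<sigma>N\<^sup>2) * (snd \<omega> e - 0))"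
  unfolding Sc_def by simp

lemma Sc_moments:
  shows "integrable (base \<Phi> N \<tau> t) (Sc \<tau> t a)" "integral\<^sup>L (base \<Phi> N \<tau> t) (Sc \<tau> t a) = 0"
    "integrable (base \<Phi> N \<tau> t) (\<lambda>\<omega>. (Sc \<tau> t a \<omega>)\<^sup>2)" "integral\<^sup>L (base \<Phi> N \<tau> t) (\<lambda>\<omega>. (Sc \<tau> t a \<omega>)\<^sup>2) = II t a"
proof -
  define F where "F x = (\<Sum>c\<in>UNIV. (vv t a c / (\<sigma> c)\<^sup>2) * (x c - (\<lambda>_. \<tau>) c))" for x :: "'s \<Rightarrow> real"
  define G where "G y = (\<Sum>e\<in>UNIV \<times> {..<t}. (ww t a e / \<sigma>N\<^sup>2) * (y e - (\<lambda>_. 0) e))" for y :: "'s \<times> nat \<Rightarrow> real"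
  have eq: "Sc \<tau> t a = (\<lambda>\<omega>. F (fst \<omega>) + G (snd \<omega>))"
    by (simp add: fun_eq_iff Sc_split F_def G_def)
  note mF = PM_lin_moments[of UNIV \<sigma> "\<lambda>_. \<tau>" "\<lambda>c. vv t a c / (\<sigma> c)\<^sup>2", OF _ sig, folded F_def, simplified]
  note mG = PM_lin_moments[of "UNIV \<times> {..<t}" "\<lambda>_. \<sigma>N" "\<lambda>_. 0" "\<lambda>e. ww t a e / \<sigma>N\<^sup>2", OF _ sigN, folded G_def, simplified]
  note pm = pair_moments[OF BX_prob BN_prob mF(1,3,2) mG(1,3,2)]
  show "integrable (base \<Phi> N \<tau> t) (Sc \<tau> t a)" unfolding eq base_eq by (rule pm(1))
  show "integral\<^sup>L (base \<Phi> N \<tau> t) (Sc \<tau> t a) = 0" unfolding eq base_eq by (rule pm(2))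
  show "integrable (base \<Phi> N \<tau> t) (\<lambda>\<omega>. (Sc \<tau> t a \<omega>)\<^sup>2)" unfolding eq base_eq by (rule pm(3))
  have "integral\<^sup>L (base \<Phi> N \<tau> t) (\<lambda>\<omega>. (Sc \<tau> t a \<omega>)\<^sup>2)
      = (\<Sum>c\<in>UNIV. (vv t a c / (\<sigma> c)\<^sup>2)\<^sup>2 * (\<sigma> c)\<^sup>2) + (\<Sum>e\<in>UNIV \<times> {..<t}. (ww t a e / \<sigma>N\<^sup>2)\<^sup>2 * \<sigma>N\<^sup>2)"
    unfolding eq base_eq pm(4) mF(4) mG(4) ..
  also have "\<dots> = II t a"
  proof -
    have "(vv t a c / (\<sigma> c)\<^sup>2)\<^sup>2 * (\<sigma> c)\<^sup>2 = (vv t a c)\<^sup>2 / (\<sigma> c)\<^sup>2" for c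
      using sig[of c] by (simp add: power2_eq_square field_simps)
    moreover have "(ww t a e / \<sigma>N\<^sup>2)\<^sup>2 * \<sigma>N\<^sup>2 = (ww t a e)\<^sup>2 / \<sigma>N\<^sup>2" for e
      using sigN by (simp add: power2_eq_square field_simps)
    ultimately show ?thesis by (simp add: II_def)
  qed
  finally show "integral\<^sup>L (base \<Phi> N \<tau> t) (\<lambda>\<omega>. (Sc \<tau> t a \<omega>)\<^sup>2) = II t a" .
qed

lemma base_uniform: "base \<Phi> N (\<tau> + s) t = distr (base \<Phi> N \<tau> t) (base \<Phi> N \<tau> t) (shift t (\<lambda>_. s) (\<lambda>_. 0))"
  unfolding base_shift by (simp add: base_eq)

lemma prob_base: "prob_space (base \<Phi> N \<tau> t)"
  unfolding base_eq by (intro prob_space_pair BX_prob BN_prob)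

lemma Xalg_Sc: "X_alg P \<Phi> N a t \<omega> = \<tau> + Sc \<tau> t a \<omega> / ccf t a"
  unfolding X_alg_def by (rule alg_fst_Sc)

lemma Xalg_moments:
  shows "integrable (base \<Phi> N \<tau> t) (X_alg P \<Phi> N a t)"
    "integral\<^sup>L (base \<Phi> N \<tau> t) (X_alg P \<Phi> N a t) = \<tau>"
    "integrable (base \<Phi> N \<tau> t) (\<lambda>\<omega>. (X_alg P \<Phi> N a t \<omega>)\<^sup>2)"
    "mvar (base \<Phi> N \<tau> t) (X_alg P \<Phi> N a t) = 1 / ccf t a"
proof -
  interpret B: prob_space "base \<Phi> N \<tau> t" by (rule prob_base)
  note m = Sc_moments[of \<tau> t a]
  have eq: "X_alg P \<Phi> N a t = (\<lambda>\<omega>. \<tau> + Sc \<tau> t a \<omega> / ccf t a)"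
    by (simp add: fun_eq_iff Xalg_Sc[of _ _ _ \<tau>])
  show i1: "integrable (base \<Phi> N \<tau> t) (X_alg P \<Phi> N a t)" unfolding eq using m by auto
  show e1: "integral\<^sup>L (base \<Phi> N \<tau> t) (X_alg P \<Phi> N a t) = \<tau>" unfolding eq using m by (simp add: B.prob_space)
  have sq: "(\<tau> + Sc \<tau> t a \<omega> / ccf t a)\<^sup>2 = \<tau>\<^sup>2 + (2 * \<tau> / ccf t a) * Sc \<tau> t a \<omega> + (1 / (ccf t a)\<^sup>2) * (Sc \<tau> t a \<omega>)\<^sup>2" for \<omega>
    using ccf_pos[of t a] by (simp add: power2_eq_square field_simps)
  show "integrable (base \<Phi> N \<tau> t) (\<lambda>\<omega>. (X_alg P \<Phi> N a t \<omega>)\<^sup>2)" unfolding eq sq using m by auto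
  have "mvar (base \<Phi> N \<tau> t) (X_alg P \<Phi> N a t) = integral\<^sup>L (base \<Phi> N \<tau> t) (\<lambda>\<omega>. (1 / (ccf t a)\<^sup>2) * (Sc \<tau> t a \<omega>)\<^sup>2)"
    unfolding mvar_def e1 by (simp add: eq power_divide)
  also have "\<dots> = 1 / ccf t a" using m(4) ccf_pos[of t a] by (simp add: II_ccf power2_eq_square)
  finally show "mvar (base \<Phi> N \<tau> t) (X_alg P \<Phi> N a t) = 1 / ccf t a" .
qed

end


context gs3
begin

lemma fst_meas[measurable]: "(\<lambda>\<omega>. fst \<omega> c) \<in> borel_measurable (base \<Phi> N \<tau> t)"
  unfolding base_eq by (intro measurable_compose[OF measurable_fst] measurable_component_singleton) auto

lemma snd_meas: "e \<in> UNIV \<times> {..<t} \<Longrightarrow> (\<lambda>\<omega>. snd \<omega> e) \<in> borel_measurable (base \<Phi> N \<tau> t)"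
  unfolding base_eq by (intro measurable_compose[OF measurable_snd] measurable_component_singleton) auto

lemma Dobs_meas: "e \<in> history P t a \<Longrightarrow> (\<lambda>\<omega>. Dobs \<omega> e) \<in> borel_measurable (base \<Phi> N \<tau> t)"
proof -
  assume e: "e \<in> history P t a"
  obtain c d r where cdr: "e = (c, d, r)" by (cases e) auto
  have "(c, r) \<in> UNIV \<times> {..<t}" using history_supp[of c d r t a] e cdr by auto
  note [measurable] = snd_meas[OF this]
  show ?thesis unfolding cdr Dobs_def by simp
qed

lemma info_meas[measurable]: "info P a t \<in> base \<Phi> N \<tau> t \<rightarrow>\<^sub>M info_space P a t"
  unfolding info_def info_space_def
proof (intro measurable_Pair)
  show "(\<lambda>\<omega>. fst \<omega> a) \<in> borel_measurable (base \<Phi> N \<tau> t)" by simp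
  show "(\<lambda>\<omega>. restrict (Dobs \<omega>) (history P t a)) \<in> base \<Phi> N \<tau> t \<rightarrow>\<^sub>M Pi\<^sub>M (history P t a) (\<lambda>_. borel)"
    by (intro measurable_restrict Dobs_meas)
qed

lemma info_shift:
  "info P a t (shift t (\<lambda>c. s * vv t a c) (\<lambda>e. s * ww t a e) \<omega>) = info P a t (shift t (\<lambda>_. s) (\<lambda>_. 0) \<omega>)"
proof -
  have "Dobs (shift t (\<lambda>c. s * vv t a c) (\<lambda>e. s * ww t a e) \<omega>) e = Dobs (shift t (\<lambda>_. s) (\<lambda>_. 0) \<omega>) e"
    if e: "e \<in> history P t a" for e
  proof -
    obtain c d r where cdr: "e = (c, d, r)" by (cases e) auto
    have r: "r < t" using history_supp[of c d r t a] e cdr by auto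
    have "vv t a d - vv t a c + ww t a (c, r) = 0" using history_inv[of c d r t a] e cdr by auto
    then have "s * (vv t a d - vv t a c + ww t a (c, r)) = 0" by simp
    then show ?thesis using r by (simp add: cdr Dobs_def shift_def algebra_simps)
  qed
  then have R: "restrict (Dobs (shift t (\<lambda>c. s * vv t a c) (\<lambda>e. s * ww t a e) \<omega>)) (history P t a)
      = restrict (Dobs (shift t (\<lambda>_. s) (\<lambda>_. 0) \<omega>)) (history P t a)"
    by (intro restrict_ext) auto
  have F: "fst (shift t (\<lambda>c. s * vv t a c) (\<lambda>e. s * ww t a e) \<omega>) a = fst (shift t (\<lambda>_. s) (\<lambda>_. 0) \<omega>) a"
    by (simp add: shift_def vv_self)
  show ?thesis unfolding info_def R F ..
qed

definition Aest :: "nat \<Rightarrow> 's \<Rightarrow> real \<times> ('s \<times> 's \<times> nat \<Rightarrow> real) \<Rightarrow> real" where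
  "Aest t a u = fst u + (\<Sum>e\<in>history P t a. beta t a e * snd u e)"

lemma Aest_meas[measurable]: "Aest t a \<in> borel_measurable (info_space P a t)"
proof -
  have [measurable]: "(\<lambda>u. snd u e) \<in> borel_measurable (info_space P a t)" if "e \<in> history P t a" for e
    unfolding info_space_def using that
    by (intro measurable_compose[OF measurable_snd] measurable_component_singleton) auto
  show ?thesis unfolding Aest_def info_space_def by measurable
qed

lemma Aest_info: "Aest t a (info P a t \<omega>) = X_alg P \<Phi> N a t \<omega>"
  by (simp add: Aest_def info_def X_alg_def alg_fst_beta)


lemma Q_shift:
  "distr (base \<Phi> N (\<tau> + s) t) (info_space P a t) (info P a t) =
   distr (density (base \<Phi> N \<tau> t) (\<lambda>\<omega>. ennreal (WW \<tau> t a s \<omega>))) (info_space P a t) (info P a t)"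
proof -
  let ?B = "base \<Phi> N \<tau> t" and ?I = "info_space P a t"
  let ?U = "shift t (\<lambda>_. s) (\<lambda>_. 0)" and ?T = "shift t (\<lambda>c. s * vv t a c) (\<lambda>e. s * ww t a e)"
  have "distr (base \<Phi> N (\<tau> + s) t) ?I (info P a t) = distr (distr ?B ?B ?U) ?I (info P a t)"
    by (simp add: base_uniform)
  also have "\<dots> = distr ?B ?I (info P a t \<circ> ?U)"
    by (rule distr_distr) auto
  also have "\<dots> = distr ?B ?I (info P a t \<circ> ?T)"
    by (rule distr_cong) (auto simp: info_shift)
  also have "\<dots> = distr (distr ?B ?B ?T) ?I (info P a t)"
    by (rule distr_distr[symmetric]) auto
  also have "\<dots> = distr (density ?B (\<lambda>\<omega>. ennreal (WW \<tau> t a s \<omega>))) ?I (info P a t)"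
    by (simp add: base_density)
  finally show ?thesis .
qed


lemma WW_nonneg: "WW \<tau> t a s \<omega> \<ge> 0" by (simp add: WW_def)

lemma WW_int:
  shows "integrable (base \<Phi> N \<tau> t) (WW \<tau> t a s)" "integral\<^sup>L (base \<Phi> N \<tau> t) (WW \<tau> t a s) = 1"
proof -
  let ?B = "base \<Phi> N \<tau> t" and ?T = "shift t (\<lambda>c. s * vv t a c) (\<lambda>e. s * ww t a e)"
  interpret B: prob_space ?B by (rule prob_base)
  have "prob_space (distr ?B ?B ?T)" by (rule B.prob_space_distr) simp
  then have "emeasure (density ?B (\<lambda>\<omega>. ennreal (WW \<tau> t a s \<omega>))) (space ?B) = 1"
    using prob_space.emeasure_space_1 by (fastforce simp: base_density)
  then have nn: "(\<integral>\<^sup>+\<omega>. ennreal (WW \<tau> t a s \<omega>) \<partial>?B) = 1"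
    by (simp add: emeasure_density)
  show "integrable ?B (WW \<tau> t a s)"
    by (rule integrableI_nonneg) (auto simp: WW_nonneg nn)
  show "integral\<^sup>L ?B (WW \<tau> t a s) = 1"
    by (subst integral_eq_nn_integral) (auto simp: WW_nonneg nn)
qed

lemma WW_sq: "(WW \<tau> t a s \<omega>)\<^sup>2 = exp (s\<^sup>2 * II t a) * WW \<tau> t a (2 * s) \<omega>"
proof -
  have "(WW \<tau> t a s \<omega>)\<^sup>2 = exp (2 * (s * Sc \<tau> t a \<omega> - s\<^sup>2 * II t a / 2))"
    by (simp add: WW_def power2_eq_square exp_add[symmetric])
  also have "\<dots> = exp (s\<^sup>2 * II t a + ((2 * s) * Sc \<tau> t a \<omega> - (2 * s)\<^sup>2 * II t a / 2))"
    by (simp add: algebra_simps power2_eq_square)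
  also have "\<dots> = exp (s\<^sup>2 * II t a) * exp ((2 * s) * Sc \<tau> t a \<omega> - (2 * s)\<^sup>2 * II t a / 2)"
    by (rule exp_add)
  finally show ?thesis by (simp only: WW_def)
qed

lemma WW_sq_int:
  shows "integrable (base \<Phi> N \<tau> t) (\<lambda>\<omega>. (WW \<tau> t a s \<omega>)\<^sup>2)"
    "integral\<^sup>L (base \<Phi> N \<tau> t) (\<lambda>\<omega>. (WW \<tau> t a s \<omega>)\<^sup>2) = exp (s\<^sup>2 * II t a)"
  using WW_int[of \<tau> t a "2 * s"] by (simp_all add: WW_sq)


lemma lower_bound:
  assumes K[measurable]: "K \<in> info_space P a t \<rightarrow>\<^sub>M prob_algebra borel"
    and unb: "\<And>\<tau>'. integrable (est_distr \<Phi> N P a t K \<tau>') (\<lambda>y. y) \<and> integral\<^sup>L (est_distr \<Phi> N P a t K \<tau>') (\<lambda>y. y) = \<tau>'"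
    and sq: "integrable (est_distr \<Phi> N P a t K \<tau>) (\<lambda>y. y\<^sup>2)"
  shows "1 / ccf t a \<le> mvar (est_distr \<Phi> N P a t K \<tau>) (\<lambda>y. y)"
proof -
  let ?I = "info_space P a t"
  define Q where "Q \<tau>' = distr (base \<Phi> N \<tau>' t) ?I (info P a t)" for \<tau>'
  have est: "est_distr \<Phi> N P a t K \<tau>' = Q \<tau>' \<bind> K" for \<tau>' by (simp add: est_distr_def Q_def)
  have PQ: "prob_space (Q \<tau>')" for \<tau>'
    unfolding Q_def by (rule prob_space.prob_space_distr[OF prob_base]) simp
  have Ks[measurable]: "K \<in> ?I \<rightarrow>\<^sub>M subprob_algebra borel" by (rule measurable_prob_algebraD[OF K])
  define g where "g = (\<lambda>u. integral\<^sup>L (K u) (\<lambda>y. y))"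
  define h where "h = (\<lambda>u. integral\<^sup>L (K u) (\<lambda>y::real. y\<^sup>2))"
  have gm[measurable]: "g \<in> borel_measurable ?I"
    unfolding g_def by (rule measurable_compose[OF Ks integral_measurable_subprob_algebra]) simp
  have hm[measurable]: "h \<in> borel_measurable ?I"
    unfolding h_def by (rule measurable_compose[OF Ks integral_measurable_subprob_algebra]) simp
  have sQ: "sets (Q \<tau>') = sets ?I" for \<tau>' by (simp add: Q_def)
  have KQ: "K \<in> Q \<tau>' \<rightarrow>\<^sub>M prob_algebra borel" for \<tau>' using K by (simp add: measurable_cong_sets[OF sQ refl])
  have gQ: "integrable (Q \<tau>') g" "integral\<^sup>L (Q \<tau>') g = \<tau>'" for \<tau>'
  proof -
    note b = bind_integral[OF PQ[of \<tau>'] KQ[of \<tau>'], of "\<lambda>y. y"]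
    have i: "integrable (Q \<tau>' \<bind> K) (\<lambda>y. y)" using unb[of \<tau>'] by (simp add: est)
    show "integrable (Q \<tau>') g" using b(2)[OF _ i] by (simp add: g_def)
    show "integral\<^sup>L (Q \<tau>') g = \<tau>'" using b(3)[OF _ i] unb[of \<tau>'] by (simp add: g_def est)
  qed
  note b2 = bind_integral[OF PQ[of \<tau>] KQ[of \<tau>], of "\<lambda>y. y\<^sup>2", OF _ sq[unfolded est]]
  have hQ: "integrable (Q \<tau>) h" "integral\<^sup>L (Q \<tau> \<bind> K) (\<lambda>y. y\<^sup>2) = integral\<^sup>L (Q \<tau>) h"
    using b2 by (simp_all add: h_def)
  have jen: "AE u in Q \<tau>. (g u)\<^sup>2 \<le> h u"
    using b2(1)[OF borel_measurable_power[OF measurable_ident_sets[OF refl]]] AE_space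
  proof eventually_elim
    case (elim u)
    have "K u \<in> space (prob_algebra borel)" using measurable_space[OF KQ elim(2)] .
    then have Pu: "prob_space (K u)" and su: "sets (K u) = sets borel" by (auto simp: space_prob_algebra)
    have mu: "(\<lambda>y::real. y) \<in> borel_measurable (K u)" by (simp add: measurable_cong_sets[OF su refl])
    show ?case using jensen_sq[OF Pu elim(1) mu] by (simp add: g_def h_def)
  qed
  have g2Q: "integrable (Q \<tau>) (\<lambda>u. (g u)\<^sup>2)"
  proof (rule Bochner_Integration.integrable_bound[OF hQ(1)])
    show "(\<lambda>u. (g u)\<^sup>2) \<in> borel_measurable (Q \<tau>)" by (simp add: measurable_cong_sets[OF sQ refl])
    show "AE u in Q \<tau>. norm ((g u)\<^sup>2) \<le> norm (h u)" using jen by eventually_elim auto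
  qed
  have g2le: "integral\<^sup>L (Q \<tau>) (\<lambda>u. (g u)\<^sup>2) \<le> integral\<^sup>L (Q \<tau>) h"
    by (rule integral_mono_AE[OF g2Q hQ(1) jen])
  let ?B = "base \<Phi> N \<tau> t"
  define Y where "Y = (\<lambda>\<omega>. g (info P a t \<omega>))"
  have im: "info P a t \<in> ?B \<rightarrow>\<^sub>M ?I" by simp
  have iY: "integrable ?B Y" using gQ(1)[of \<tau>] integrable_distr_eq[OF im gm] by (simp add: Q_def Y_def)
  have eY: "integral\<^sup>L ?B Y = \<tau>" using gQ(2)[of \<tau>] integral_distr[OF im gm] by (simp add: Q_def Y_def)
  have g2m: "(\<lambda>u. (g u)\<^sup>2) \<in> borel_measurable ?I" by simp
  have iY2: "integrable ?B (\<lambda>\<omega>. (Y \<omega>)\<^sup>2)" using g2Q integrable_distr_eq[OF im g2m] by (simp add: Q_def Y_def)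
  have eY2: "integral\<^sup>L ?B (\<lambda>\<omega>. (Y \<omega>)\<^sup>2) = integral\<^sup>L (Q \<tau>) (\<lambda>u. (g u)\<^sup>2)"
    using integral_distr[OF im g2m] by (simp add: Q_def Y_def)
  interpret E: prob_space "Q \<tau> \<bind> K"
  proof (rule prob_space.prob_space_bind[OF PQ _ measurable_prob_algebraD[OF KQ]])
    show "AE x in Q \<tau>. prob_space (K x)"
    proof (rule AE_I2)
      fix x assume "x \<in> space (Q \<tau>)"
      then have "K x \<in> space (prob_algebra borel)" by (rule measurable_space[OF KQ])
      then show "prob_space (K x)" by (simp add: space_prob_algebra)
    qed
  qed
  have i1: "integrable (Q \<tau> \<bind> K) (\<lambda>y. y)" and e1: "integral\<^sup>L (Q \<tau> \<bind> K) (\<lambda>y. y) = \<tau>"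
    using unb[of \<tau>] by (simp_all add: est)
  have mv: "mvar (est_distr \<Phi> N P a t K \<tau>) (\<lambda>y. y) = integral\<^sup>L (Q \<tau> \<bind> K) (\<lambda>y. y\<^sup>2) - \<tau>\<^sup>2"
  proof -
    have "(\<lambda>y. (y - \<tau>)\<^sup>2) = (\<lambda>y. y\<^sup>2 - 2 * \<tau> * y + \<tau>\<^sup>2)" by (simp add: fun_eq_iff power2_eq_square algebra_simps)
    then show ?thesis unfolding mvar_def est e1 using i1 sq[unfolded est] e1
      by (simp add: E.prob_space power2_eq_square)
  qed
  have vY: "integral\<^sup>L ?B (\<lambda>\<omega>. (Y \<omega> - \<tau>)\<^sup>2) = integral\<^sup>L ?B (\<lambda>\<omega>. (Y \<omega>)\<^sup>2) - \<tau>\<^sup>2"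
  proof -
    interpret B: prob_space ?B by (rule prob_base)
    have "(\<lambda>\<omega>. (Y \<omega> - \<tau>)\<^sup>2) = (\<lambda>\<omega>. (Y \<omega>)\<^sup>2 - 2 * \<tau> * Y \<omega> + \<tau>\<^sup>2)" by (simp add: fun_eq_iff power2_eq_square algebra_simps)
    then show ?thesis using iY iY2 eY by (simp add: B.prob_space power2_eq_square)
  qed
  have vle: "integral\<^sup>L ?B (\<lambda>\<omega>. (Y \<omega> - \<tau>)\<^sup>2) \<le> mvar (est_distr \<Phi> N P a t K \<tau>) (\<lambda>y. y)"
    unfolding vY mv eY2 using g2le hQ(2) by simp
  have cpos: "II t a > 0" using ccf_pos by (simp add: II_ccf)
  show ?thesis unfolding II_ccf[symmetric]
  proof (rule exp_bound_limit[OF cpos])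
    fix s :: real assume s: "s > 0"
    let ?W = "WW \<tau> t a s"
    have E2: "exp (s\<^sup>2 * II t a) > 1" using s cpos by simp
    have Qs: "Q (\<tau> + s) = distr (density ?B (\<lambda>\<omega>. ennreal (?W \<omega>))) ?I (info P a t)"
      unfolding Q_def by (rule Q_shift)
    have imD: "info P a t \<in> density ?B (\<lambda>\<omega>. ennreal (?W \<omega>)) \<rightarrow>\<^sub>M ?I" by simp
    have "integrable (density ?B (\<lambda>\<omega>. ennreal (?W \<omega>))) Y"
      using gQ(1)[of "\<tau> + s"] integrable_distr_eq[OF imD gm] by (simp add: Qs Y_def)
    then have iWY: "integrable ?B (\<lambda>\<omega>. ?W \<omega> * Y \<omega>)"
      by (subst (asm) integrable_density) (auto simp: Y_def WW_nonneg)
    have "integral\<^sup>L (density ?B (\<lambda>\<omega>. ennreal (?W \<omega>))) Y = \<tau> + s"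
      using gQ(2)[of "\<tau> + s"] integral_distr[OF imD gm] by (simp add: Qs Y_def)
    then have eWY: "integral\<^sup>L ?B (\<lambda>\<omega>. ?W \<omega> * Y \<omega>) = \<tau> + s"
      by (subst (asm) integral_density) (auto simp: Y_def WW_nonneg)
    have "s\<^sup>2 \<le> integral\<^sup>L ?B (\<lambda>\<omega>. (Y \<omega> - \<tau>)\<^sup>2) * (exp (s\<^sup>2 * II t a) - 1)"
      by (rule hcr[OF prob_base iY iY2 WW_int(1) WW_sq_int(1) iWY eY WW_int(2) WW_sq_int(2) E2 eWY])
    then have "s\<^sup>2 / (exp (s\<^sup>2 * II t a) - 1) \<le> integral\<^sup>L ?B (\<lambda>\<omega>. (Y \<omega> - \<tau>)\<^sup>2)"
      using E2 by (simp add: divide_le_eq)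
    then show "s\<^sup>2 / (exp (s\<^sup>2 * II t a) - 1) \<le> mvar (est_distr \<Phi> N P a t K \<tau>) (\<lambda>y. y)"
      using vle by linarith
  qed
qed


definition K0 :: "nat \<Rightarrow> 's \<Rightarrow> real \<times> ('s \<times> 's \<times> nat \<Rightarrow> real) \<Rightarrow> real measure" where
  "K0 t a u = return borel (Aest t a u)"

lemma K0_meas: "K0 t a \<in> info_space P a t \<rightarrow>\<^sub>M prob_algebra borel"
  unfolding K0_def by (rule measurable_compose[OF Aest_meas measurable_return_prob_space])

lemma est_K0: "est_distr \<Phi> N P a t (K0 t a) \<tau> = distr (base \<Phi> N \<tau> t) borel (X_alg P \<Phi> N a t)"
proof -
  let ?B = "base \<Phi> N \<tau> t" and ?I = "info_space P a t"
  obtain \<omega> where "\<omega> \<in> space ?B" using prob_space.not_empty[OF prob_base[of \<tau> t]] by auto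
  then have "info P a t \<omega> \<in> space ?I" by (rule measurable_space[OF info_meas])
  then have ne: "space (distr ?B ?I (info P a t)) \<noteq> {}" by auto
  have "est_distr \<Phi> N P a t (K0 t a) \<tau> = distr (distr ?B ?I (info P a t)) borel (Aest t a)"
    unfolding est_distr_def K0_def by (rule bind_return_distr'[OF ne]) simp
  also have "\<dots> = distr ?B borel (Aest t a \<circ> info P a t)"
    by (rule distr_distr) simp_all
  also have "\<dots> = distr ?B borel (X_alg P \<Phi> N a t)"
    by (rule distr_cong) (auto simp: Aest_info)
  finally show ?thesis .
qed

lemma Xalg_meas[measurable]: "X_alg P \<Phi> N a t \<in> borel_measurable (base \<Phi> N \<tau> t)"
proof -
  have "X_alg P \<Phi> N a t = (\<lambda>\<omega>. \<tau> + Sc \<tau> t a \<omega> / ccf t a)" by (simp add: fun_eq_iff Xalg_Sc[of _ _ _ \<tau>])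
  then show ?thesis by simp
qed

lemma K0_props:
  shows "unbiased_estimator \<Phi> N P a t (K0 t a)"
    "integrable (est_distr \<Phi> N P a t (K0 t a) \<tau>) (\<lambda>y. y\<^sup>2)"
    "mvar (est_distr \<Phi> N P a t (K0 t a) \<tau>) (\<lambda>y. y) = 1 / ccf t a"
proof -
  have Xm: "X_alg P \<Phi> N a t \<in> base \<Phi> N \<tau>' t \<rightarrow>\<^sub>M borel" for \<tau>' by simp
  show "unbiased_estimator \<Phi> N P a t (K0 t a)"
    unfolding unbiased_estimator_def
  proof (intro conjI allI K0_meas)
    fix \<tau>'
    show "integrable (est_distr \<Phi> N P a t (K0 t a) \<tau>') (\<lambda>y. y)"
      unfolding est_K0 using Xalg_moments(1)[of \<tau>' t a] by (subst integrable_distr_eq[OF Xm]) auto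
    show "integral\<^sup>L (est_distr \<Phi> N P a t (K0 t a) \<tau>') (\<lambda>y. y) = \<tau>'"
      unfolding est_K0 using Xalg_moments(2)[of \<tau>' t a] by (subst integral_distr[OF Xm]) auto
  qed
  show "integrable (est_distr \<Phi> N P a t (K0 t a) \<tau>) (\<lambda>y. y\<^sup>2)"
    unfolding est_K0 using Xalg_moments(3)[of \<tau> t a] by (subst integrable_distr_eq[OF Xm]) auto
  have e: "integral\<^sup>L (distr (base \<Phi> N \<tau> t) borel (X_alg P \<Phi> N a t)) (\<lambda>y. y) = \<tau>"
    using Xalg_moments(2)[of \<tau> t a] by (subst integral_distr[OF Xm]) auto
  have "mvar (est_distr \<Phi> N P a t (K0 t a) \<tau>) (\<lambda>y. y) = mvar (base \<Phi> N \<tau> t) (X_alg P \<Phi> N a t)"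
    unfolding est_K0 mvar_def e Xalg_moments(2)[of \<tau> t a] by (subst integral_distr[OF Xm]) auto
  then show "mvar (est_distr \<Phi> N P a t (K0 t a) \<tau>) (\<lambda>y. y) = 1 / ccf t a"
    using Xalg_moments(4) by simp
qed

theorem main_result: "mvar (base \<Phi> N \<tau> t) (X_alg P \<Phi> N a t) = Vopt \<Phi> N P \<tau> a t"
proof -
  define S where "S = {mvar (est_distr \<Phi> N P a t K \<tau>) (\<lambda>y. y) | K.
            unbiased_estimator \<Phi> N P a t K \<and> integrable (est_distr \<Phi> N P a t K \<tau>) (\<lambda>y. y\<^sup>2)}"
  have mem: "1 / ccf t a \<in> S"
  proof -
    note k = K0_props
    have "\<exists>K. 1 / ccf t a = mvar (est_distr \<Phi> N P a t K \<tau>) (\<lambda>y. y) \<and>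
        unbiased_estimator \<Phi> N P a t K \<and> integrable (est_distr \<Phi> N P a t K \<tau>) (\<lambda>y. y\<^sup>2)"
      by (rule exI[of _ "K0 t a"]) (use k in simp)
    then show ?thesis unfolding S_def by blast
  qed
  have low: "\<And>x. x \<in> S \<Longrightarrow> 1 / ccf t a \<le> x"
    unfolding S_def unbiased_estimator_def using lower_bound by blast
  have "Vopt \<Phi> N P \<tau> a t = Inf S" by (simp add: Vopt_def S_def)
  also have "\<dots> = 1 / ccf t a" using mem low by (intro cInf_eq_minimum) auto
  finally show ?thesis using Xalg_moments(4) by simp
qed

end

theorem corollary2:
  fixes F :: "(real \<Rightarrow> real) set"
    and N :: "real \<Rightarrow> real"
    and \<Phi> :: "'s::finite \<Rightarrow> real \<Rightarrow> real"
    and P :: "nat \<Rightarrow> 's \<Rightarrow> 's option"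
    and \<tau> :: real and a :: 's and t :: nat
  assumes "finite F" and "N \<in> F"
    and gaussian: "\<forall>\<phi>\<in>F. \<exists>\<sigma>>0. \<phi> = normal_density 0 \<sigma>"
    and "\<forall>c. \<Phi> c \<in> F"
    and "meeting_pattern P" and "independent_pattern P"
  shows "mvar (base \<Phi> N \<tau> t) (X_alg P \<Phi> N a t) = Vopt \<Phi> N P \<tau> a t"
proof -
  have "\<forall>c. \<exists>\<sigma>. \<sigma> > 0 \<and> \<Phi> c = normal_density 0 \<sigma>" using gaussian assms(4) by blast
  then obtain \<sigma> where \<sigma>: "\<And>c. \<sigma> c > 0 \<and> \<Phi> c = normal_density 0 (\<sigma> c)" by metis
  obtain \<sigma>N where \<sigma>N: "\<sigma>N > 0" "N = normal_density 0 \<sigma>N" using gaussian assms(2) by blast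
  interpret G: gs3 P \<sigma> \<sigma>N \<Phi> N
    by unfold_locales (use \<sigma> \<sigma>N assms(6) in auto)
  show ?thesis by (rule G.main_result)
qed

end
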